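(* Let $H,K$ be Hilbert spaces and let $T$ be a densely defined closed operator from $D(T)\subset H$ into $K$ with closed range. Then: (1) $w(T)=(T^{\dagger})^{*}$ and it is bounded; (2) $w(w(T))$ is closable and $\overline{w(w(T))}=T$; (3) $(w(T))^{*}=w(T^{*})$; (4) $T^{*}w(T)=\overline{w(T^{*})T}=P_{R(T^{*})}$; (5) $\overline{w(T)T^{*}}=T\,w(T^{*})=P_{R(T)}$; (6) $w(T)^{*}w(T)=w(T^{*}T)$.
   Context: For a densely defined closed operator $A$ with closed range from $D(A)\subset H_1$ into a Hilbert space $H_2$, $A^{*}$ is its adjoint, $C(A)=D(A)\cap N(A)^{\perp}$, and the Moore–Penrose inverse $A^{\dagger}$ is defined on $R(A)\oplus^{\perp}R(A)^{\perp}$ by $A^{\dagger}y=(A|_{C(A)})^{-1}y$ for $y\in R(A)$ and $A^{\dagger}y=0$ for $y\in R(A)^{\perp}$ (it is bounded). The generalized Cauchy dual is $w(A)=A(A^{*}A)^{\dagger}$, with products of operators on natural domains. $P_V$ denotes the orthogonal projection onto a closed subspace $V$; $\overline{B}$ denotes the closure of a closable operator $B$. *)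

theory Defs
  imports "HOL-Analysis.Analysis"
begin

text \<open>Linear operators (possibly unbounded, not everywhere defined) between real
Hilbert spaces are represented by their graphs: a set of pairs (x, A x).
The domain is Domain A, the range is Range A.\<close>

definition is_op :: "('a::real_vector \<times> 'b::real_vector) set \<Rightarrow> bool" where
  "is_op A \<longleftrightarrow> subspace A \<and> (\<forall>x y z. (x, y) \<in> A \<longrightarrow> (x, z) \<in> A \<longrightarrow> y = z)"

definition densely_defined :: "('a::topological_space \<times> 'b) set \<Rightarrow> bool" where
  "densely_defined A \<longleftrightarrow> closure (Domain A) = UNIV"

definition closed_op :: "('a::topological_space \<times> 'b::topological_space) set \<Rightarrow> bool" where
  "closed_op A \<longleftrightarrow> closed A"

definition closable :: "('a::real_normed_vector \<times> 'b::real_normed_vector) set \<Rightarrow> bool" where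
  "closable A \<longleftrightarrow> is_op (closure A)"

definition op_closure :: "('a::topological_space \<times> 'b::topological_space) set \<Rightarrow> ('a \<times> 'b) set" where
  "op_closure A = closure A"

definition bounded_op :: "('a::real_normed_vector \<times> 'b::real_normed_vector) set \<Rightarrow> bool" where
  "bounded_op A \<longleftrightarrow> (\<exists>C. \<forall>x y. (x, y) \<in> A \<longrightarrow> norm y \<le> C * norm x)"

definition null_space :: "('a \<times> 'b::zero) set \<Rightarrow> 'a set" where
  "null_space A = {x. (x, 0) \<in> A}"

definition adj :: "('a::real_inner \<times> 'b::real_inner) set \<Rightarrow> ('b \<times> 'a) set" where
  "adj A = {(y, z). \<forall>x w. (x, w) \<in> A \<longrightarrow> inner w y = inner x z}"

definition op_mult :: "('b \<times> 'c) set \<Rightarrow> ('a \<times> 'b) set \<Rightarrow> ('a \<times> 'c) set" where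
  "op_mult A B = {(x, z). \<exists>y. (x, y) \<in> B \<and> (y, z) \<in> A}"

definition carrier_op :: "('a::real_inner \<times> 'b::real_vector) set \<Rightarrow> 'a set" where
  "carrier_op A = Domain A \<inter> orthogonal_comp (null_space A)"

definition mp_inv :: "('a::real_inner \<times> 'b::real_inner) set \<Rightarrow> ('b \<times> 'a) set" where
  "mp_inv A = {(y1 + y2, x) | x y1 y2. (x, y1) \<in> A \<and> x \<in> carrier_op A
                                     \<and> y2 \<in> orthogonal_comp (Range A)}"

text \<open>Generalized Cauchy dual w(A) = A (A* A)\<dagger>.\<close>
definition cauchy_dual :: "('a::real_inner \<times> 'b::real_inner) set \<Rightarrow> ('a \<times> 'b) set" where
  "cauchy_dual A = op_mult A (mp_inv (op_mult (adj A) A))"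

definition proj_op :: "'a::real_inner set \<Rightarrow> ('a \<times> 'a) set" where
  "proj_op V = {(x, y). y \<in> V \<and> x - y \<in> orthogonal_comp V}"

end

theory Submission
  imports Defs
begin

lemma parallelogram:
  fixes u w :: "'a::real_inner"
  shows "norm (u + w)^2 + norm (u - w)^2 = 2 * norm u ^2 + 2 * norm w ^2"
  by (simp add: power2_norm_eq_inner inner_add_left inner_add_right inner_diff_left inner_diff_right inner_commute)

lemma infdist_approx:
  assumes "A \<noteq> {}" "e > 0"
  shows "\<exists>a\<in>A. dist x a < infdist x A + e"
proof (rule ccontr)
  assume "\<not> ?thesis"
  then have "\<forall>a\<in>A. infdist x A + e \<le> dist x a" by (auto simp: not_less)
  then have "infdist x A + e \<le> infdist x A"
    unfolding infdist_notempty[OF assms(1)] using assms(1)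
    by (intro cINF_greatest) auto
  then show False using assms by simp
qed

lemma proj_exists:
  fixes V :: "'a::{real_inner,complete_space} set"
  assumes sV: "subspace V" and cV: "closed V"
  shows "\<exists>p\<in>V. x - p \<in> orthogonal_comp V"
proof -
  define d where "d = infdist x V"
  have ne: "V \<noteq> {}" using sV subspace_0 by blast
  have dle: "\<And>y. y \<in> V \<Longrightarrow> d \<le> norm (x - y)"
    unfolding d_def by (metis dist_norm infdist_le)
  have d0: "0 \<le> d" unfolding d_def by (rule infdist_nonneg)
  have "\<forall>n::nat. \<exists>v\<in>V. dist x v < d + 1/(real n+1)"
    using infdist_approx[OF ne] unfolding d_def by simp
  then obtain v where v: "\<And>n. v n \<in> V" "\<And>n. norm (x - v n) < d + 1/(real n+1)"
    unfolding dist_norm by metis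
  have key: "norm (a - b)^2 \<le> 2 * norm (x - a)^2 + 2 * norm (x - b)^2 - 4 * d^2"
    if "a \<in> V" "b \<in> V" for a b
  proof -
    have m: "(1/2) *\<^sub>R (a + b) \<in> V" using sV that by (simp add: subspace_add subspace_scale)
    have "d \<le> norm (x - (1/2) *\<^sub>R (a + b))" using dle[OF m] .
    then have "d^2 \<le> norm (x - (1/2) *\<^sub>R (a + b))^2" using d0 by (simp add: power_mono)
    moreover have "(x - a) + (x - b) = 2 *\<^sub>R (x - (1/2) *\<^sub>R (a + b))"
      by (simp add: algebra_simps scaleR_2)
    then have "norm ((x - a) + (x - b))^2 = 4 * norm (x - (1/2) *\<^sub>R (a + b))^2"
      by (simp add: power_mult_distrib)
    moreover have "norm ((x - a) - (x - b))^2 = norm (a - b)^2" by (simp add: norm_minus_commute)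
    ultimately show ?thesis using parallelogram[of "x - a" "x - b"] by linarith
  qed
  have cauchy: "Cauchy v"
  proof (rule metric_CauchyI)
    fix e :: real assume e: "e > 0"
    define \<eta> where "\<eta> = min 1 ((e/2)^2 / (4 * (2*d+1)))"
    have eta: "\<eta> > 0" "\<eta> \<le> 1" "\<eta> \<le> (e/2)^2 / (4 * (2*d+1))" using e d0 by (auto simp: \<eta>_def)
    obtain N :: nat where N: "1 / (real N + 1) < \<eta>"
    proof -
      obtain n where "inverse (real (Suc n)) < \<eta>" using reals_Archimedean[OF eta(1)] by blast
      then show ?thesis using that[of n] by (simp add: inverse_eq_divide add.commute)
    qed
    show "\<exists>M. \<forall>m\<ge>M. \<forall>n\<ge>M. dist (v m) (v n) < e"
    proof (intro exI allI impI)
      fix m n assume mn: "N \<le> m" "N \<le> n"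
      have b: "norm (x - v k) < d + \<eta>" if "N \<le> k" for k
      proof -
        have "1/(real k+1) \<le> 1/(real N+1)" using that by (simp add: frac_le)
        then show ?thesis using v(2)[of k] N by linarith
      qed
      have sq: "norm (x - v k)^2 \<le> (d + \<eta>)^2" if "N \<le> k" for k
        using b[OF that] by (simp add: power_mono less_imp_le)
      have "norm (v m - v n)^2 \<le> 2*(d+\<eta>)^2 + 2*(d+\<eta>)^2 - 4*d^2"
        using key[OF v(1) v(1), of m n] sq[OF mn(1)] sq[OF mn(2)] by linarith
      also have "\<dots> = 4*\<eta>*(2*d+\<eta>)" by (simp add: power2_eq_square algebra_simps)
      also have "\<dots> \<le> 4*\<eta>*(2*d+1)" using eta d0 by (intro mult_left_mono) auto
      also have "\<dots> \<le> (e/2)^2" using eta(3) d0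
        by (simp add: field_simps)
      finally have "norm (v m - v n)^2 \<le> (e/2)^2" .
      then have "norm (v m - v n) \<le> e/2" using e by (simp add: power2_le_iff_abs_le)
      then show "dist (v m) (v n) < e" using e by (simp add: dist_norm)
    qed
  qed
  then obtain p where lim: "v \<longlonglongrightarrow> p" using Cauchy_convergent_iff convergent_def by blast
  have pV: "p \<in> V" using cV v(1) lim closed_sequential_limits by blast
  have "(\<lambda>n. norm (x - v n)) \<longlonglongrightarrow> norm (x - p)"
    by (intro tendsto_intros lim)
  moreover have "(\<lambda>n. d + 1/(real n+1)) \<longlonglongrightarrow> d + 0"
    using LIMSEQ_inverse_real_of_nat_add[of d] by (simp add: inverse_eq_divide add.commute)
  ultimately have "norm (x - p) \<le> d + 0"
    by (rule LIMSEQ_le) (use v(2) less_imp_le in blast)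
  then have pmin: "norm (x - p) \<le> norm (x - y)" if "y \<in> V" for y using dle[OF that] by simp
  have "inner y (x - p) = 0" if y: "y \<in> V" for y
  proof (cases "y = 0")
    case True then show ?thesis by simp
  next
    case False
    define z where "z = x - p"
    define c where "c = inner y z"
    define t where "t = c / (norm y)^2"
    have yy: "(norm y)^2 > 0" using False by simp
    have "p + t *\<^sub>R y \<in> V" using sV pV y by (simp add: subspace_add subspace_scale)
    from pmin[OF this] have "norm z ^2 \<le> norm (z - t *\<^sub>R y)^2"
      by (simp add: z_def power_mono diff_diff_eq)
    also have "\<dots> = norm z^2 - 2*t*c + t^2 * (norm y)^2"
      unfolding power2_norm_eq_inner by (simp add: inner_diff_left inner_diff_right c_def inner_commute power2_eq_square algebra_simps)
    finally have "2*t*c \<le> t^2 * (norm y)^2" by simp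
    moreover have "t*c = c^2/(norm y)^2" by (simp add: t_def power2_eq_square)
    moreover have "t^2*(norm y)^2 = c^2/(norm y)^2" using yy
      by (simp add: t_def power_divide power2_eq_square)
    ultimately have "c^2/(norm y)^2 \<le> 0" by simp
    then have "c^2 \<le> 0" using yy by (simp add: divide_le_0_iff)
    then show ?thesis by (simp add: c_def z_def)
  qed
  then show ?thesis using pV by (auto simp: orthogonal_comp_def orthogonal_def)
qed


lemma in_perp_iff: "x \<in> orthogonal_comp V \<longleftrightarrow> (\<forall>y\<in>V. inner y x = 0)"
  by (auto simp: orthogonal_comp_def orthogonal_def)

lemma subspace_closure_real:
  fixes V :: "'a::real_normed_vector set"
  assumes "subspace V"
  shows "subspace (closure V)"
  unfolding subspace_def
proof (intro conjI ballI allI)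
  show "0 \<in> closure V" using assms subspace_0 closure_subset by blast
next
  fix x y assume "x \<in> closure V" "y \<in> closure V"
  then obtain a b where a: "\<And>n. a n \<in> V" "a \<longlonglongrightarrow> x" and b: "\<And>n. b n \<in> V" "b \<longlonglongrightarrow> y"
    unfolding closure_sequential by metis
  have "(\<lambda>n. a n + b n) \<longlonglongrightarrow> x + y" by (intro tendsto_intros a b)
  moreover have "\<And>n. a n + b n \<in> V" using a b assms subspace_add by blast
  ultimately show "x + y \<in> closure V" unfolding closure_sequential
    by (intro exI[of _ "\<lambda>n. a n + b n"]) auto
next
  fix c :: real and x assume "x \<in> closure V"
  then obtain a where a: "\<And>n. a n \<in> V" "a \<longlonglongrightarrow> x"
    unfolding closure_sequential by metis
  have "(\<lambda>n. c *\<^sub>R a n) \<longlonglongrightarrow> c *\<^sub>R x" by (intro tendsto_intros a)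
  moreover have "\<And>n. c *\<^sub>R a n \<in> V" using a assms subspace_scale by blast
  ultimately show "c *\<^sub>R x \<in> closure V" unfolding closure_sequential
    by (intro exI[of _ "\<lambda>n. c *\<^sub>R a n"]) auto
qed

lemma closed_orthogonal_comp:
  fixes V :: "'a::real_inner set"
  shows "closed (orthogonal_comp V)"
proof -
  have "orthogonal_comp V = (\<Inter>y\<in>V. {x. inner y x = 0})"
    by (auto simp: orthogonal_comp_def orthogonal_def)
  moreover have "closed {x. inner y x = (0::real)}" for y
    by (intro closed_Collect_eq continuous_intros)
  ultimately show ?thesis by auto
qed

lemma orthogonal_comp_closure:
  fixes V :: "'a::real_inner set"
  shows "orthogonal_comp (closure V) = orthogonal_comp V"
proof
  show "orthogonal_comp (closure V) \<subseteq> orthogonal_comp V"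
    using closure_subset orthogonal_comp_anti_mono by blast
next
  show "orthogonal_comp V \<subseteq> orthogonal_comp (closure V)"
  proof
    fix x assume x: "x \<in> orthogonal_comp V"
    have "closure V \<subseteq> {y. inner y x = 0}"
    proof (rule closure_minimal)
      show "V \<subseteq> {y. inner y x = 0}" using x by (auto simp: orthogonal_comp_def orthogonal_def)
      show "closed {y. inner y x = (0::real)}" by (intro closed_Collect_eq continuous_intros)
    qed
    then show "x \<in> orthogonal_comp (closure V)" by (auto simp: orthogonal_comp_def orthogonal_def)
  qed
qed

lemma perp_perp_closed:
  fixes V :: "'a::{real_inner,complete_space} set"
  assumes "subspace V" "closed V"
  shows "orthogonal_comp (orthogonal_comp V) = V"
proof
  show "V \<subseteq> orthogonal_comp (orthogonal_comp V)" by (rule orthogonal_comp_subset)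
next
  show "orthogonal_comp (orthogonal_comp V) \<subseteq> V"
  proof
    fix x assume x: "x \<in> orthogonal_comp (orthogonal_comp V)"
    obtain p where p: "p \<in> V" "x - p \<in> orthogonal_comp V" using proj_exists[OF assms] by blast
    have "\<forall>y\<in>V. inner (x - p) y = 0" using p(2) by (simp add: in_perp_iff inner_commute)
    have "inner (x - p) x = 0" using x p(2) by (simp add: in_perp_iff)
    moreover have "inner (x - p) p = 0" using p by (auto simp: orthogonal_comp_def orthogonal_def inner_commute)
    ultimately have "inner (x - p) (x - p) = 0" by (simp add: inner_diff_right)
    then show "x \<in> V" using p(1) by simp
  qed
qed

lemma perp_perp:
  fixes V :: "'a::{real_inner,complete_space} set"
  assumes "subspace V"
  shows "orthogonal_comp (orthogonal_comp V) = closure V"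
proof -
  have "orthogonal_comp (orthogonal_comp (closure V)) = closure V"
    using perp_perp_closed[OF subspace_closure_real[OF assms]] by simp
  moreover have "orthogonal_comp (closure V) = orthogonal_comp V" by (rule orthogonal_comp_closure)
  ultimately show ?thesis by simp
qed

lemma perp_zero_dense:
  fixes V :: "'a::{real_inner,complete_space} set"
  assumes "subspace V" "orthogonal_comp V \<subseteq> {0}"
  shows "closure V = UNIV"
proof -
  have "orthogonal_comp V = {0}" using assms subspace_0[OF subspace_orthogonal_comp] by blast
  then show ?thesis using perp_perp[OF assms(1)] by simp
qed


definition orth_proj :: "'a::real_inner set \<Rightarrow> 'a \<Rightarrow> 'a" where
  "orth_proj V x = (SOME p. p \<in> V \<and> x - p \<in> orthogonal_comp V)"

context
  fixes V :: "'a::{real_inner,complete_space} set"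
  assumes sV: "subspace V" and cV: "closed V"
begin

lemma orth_proj: "orth_proj V x \<in> V" "x - orth_proj V x \<in> orthogonal_comp V"
proof -
  obtain p where "p \<in> V \<and> x - p \<in> orthogonal_comp V" using proj_exists[OF sV cV, of x] by blast
  then have "orth_proj V x \<in> V \<and> x - orth_proj V x \<in> orthogonal_comp V"
    unfolding orth_proj_def by (rule someI[where P="\<lambda>p. p \<in> V \<and> x - p \<in> orthogonal_comp V"])
  then show "orth_proj V x \<in> V" "x - orth_proj V x \<in> orthogonal_comp V" by auto
qed

lemma orth_proj_unique:
  assumes "p \<in> V" "x - p \<in> orthogonal_comp V"
  shows "orth_proj V x = p"
proof -
  have "orth_proj V x - p \<in> V" using orth_proj(1) assms(1) sV subspace_diff by blast
  moreover have "orth_proj V x - p = (x - p) - (x - orth_proj V x)" by simp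
  then have "orth_proj V x - p \<in> orthogonal_comp V"
    using assms(2) orth_proj(2) subspace_diff[OF subspace_orthogonal_comp] by metis
  ultimately have "orth_proj V x - p \<in> V \<inter> orthogonal_comp V" by blast
  then show ?thesis using orthogonal_Int_0[OF sV] by auto
qed

lemma linear_orth_proj: "linear (orth_proj V)"
proof (rule linearI)
  fix x y
  show "orth_proj V (x + y) = orth_proj V x + orth_proj V y"
  proof (rule orth_proj_unique)
    show "orth_proj V x + orth_proj V y \<in> V" using orth_proj sV subspace_add by blast
    have "x + y - (orth_proj V x + orth_proj V y) = (x - orth_proj V x) + (y - orth_proj V y)" by simp
    then show "x + y - (orth_proj V x + orth_proj V y) \<in> orthogonal_comp V"
      using orth_proj(2) subspace_add[OF subspace_orthogonal_comp] by metis
  qed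
next
  fix c :: real and x
  show "orth_proj V (c *\<^sub>R x) = c *\<^sub>R orth_proj V x"
  proof (rule orth_proj_unique)
    show "c *\<^sub>R orth_proj V x \<in> V" using orth_proj sV subspace_scale by blast
    have "c *\<^sub>R x - c *\<^sub>R orth_proj V x = c *\<^sub>R (x - orth_proj V x)" by (simp add: scaleR_diff_right)
    then show "c *\<^sub>R x - c *\<^sub>R orth_proj V x \<in> orthogonal_comp V"
      using orth_proj(2) subspace_scale[OF subspace_orthogonal_comp] by metis
  qed
qed

lemma orth_proj_pyth: "norm x ^2 = norm (orth_proj V x)^2 + norm (x - orth_proj V x)^2"
proof -
  define a where "a = orth_proj V x"
  define b where "b = x - a"
  have o: "inner a b = 0" using orth_proj unfolding a_def b_def by (auto simp: in_perp_iff)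
  have "x = a + b" by (simp add: b_def)
  then have "norm x ^2 = norm (a + b)^2" by simp
  also have "\<dots> = norm a^2 + norm b^2"
    unfolding power2_norm_eq_inner using o by (simp add: inner_add_left inner_add_right inner_commute)
  finally show ?thesis by (simp add: a_def b_def)
qed

lemma orth_proj_norm: "norm (orth_proj V x) \<le> norm x"
proof (rule power2_le_imp_le)
  show "norm (orth_proj V x)^2 \<le> norm x ^2" using orth_proj_pyth[of x] by simp
qed simp

lemma bounded_linear_orth_proj: "bounded_linear (orth_proj V)"
proof (rule bounded_linear_intro[where K=1])
  show "orth_proj V (x + y) = orth_proj V x + orth_proj V y" for x y
    using linear_orth_proj by (simp add: linear_add)
  show "orth_proj V (r *\<^sub>R x) = r *\<^sub>R orth_proj V x" for r x
    using linear_orth_proj by (simp add: linear_scale)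
  show "norm (orth_proj V x) \<le> norm x * 1" for x using orth_proj_norm by simp
qed

lemma continuous_orth_proj: "continuous_on S (orth_proj V)"
  using bounded_linear_orth_proj linear_continuous_on by blast

lemma orth_proj_id: "x \<in> V \<Longrightarrow> orth_proj V x = x"
  by (rule orth_proj_unique) (auto simp: in_perp_iff)

lemma orth_proj_perp_zero: "x \<in> orthogonal_comp V \<Longrightarrow> orth_proj V x = 0"
  by (rule orth_proj_unique) (auto simp: sV subspace_0)

end


lemma sub_add: "subspace A \<Longrightarrow> (a, b) \<in> A \<Longrightarrow> (c, d) \<in> A \<Longrightarrow> (a + c, b + d) \<in> A"
  by (metis add_Pair subspace_add)

lemma sub_scale: "subspace A \<Longrightarrow> (a, b) \<in> A \<Longrightarrow> (r *\<^sub>R a, r *\<^sub>R b) \<in> A"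
  by (metis scaleR_Pair subspace_scale)

lemma sub_0: "subspace A \<Longrightarrow> (0, 0) \<in> A"
  by (metis subspace_0 zero_prod_def)

lemma sub_diff: "subspace A \<Longrightarrow> (a, b) \<in> A \<Longrightarrow> (c, d) \<in> A \<Longrightarrow> (a - c, b - d) \<in> A"
  by (metis diff_Pair subspace_diff)

lemma sub_neg: "subspace A \<Longrightarrow> (a, b) \<in> A \<Longrightarrow> (- a, - b) \<in> A"
  using sub_scale[of A a b "-1"] by simp

lemma subspace_Domain: "subspace A \<Longrightarrow> subspace (Domain A)"
  unfolding subspace_def[of "Domain A"]
  by (intro conjI ballI allI; (elim DomainE)?; (metis Domain.DomainI sub_0 sub_add sub_scale))

lemma subspace_Range: "subspace A \<Longrightarrow> subspace (Range A)"
  unfolding subspace_def[of "Range A"]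
  by (intro conjI ballI allI; (elim RangeE)?; (metis Range.RangeI sub_0 sub_add sub_scale))

lemma subspace_pairI:
  assumes "(0, 0) \<in> S" "\<And>a b c d. (a, b) \<in> S \<Longrightarrow> (c, d) \<in> S \<Longrightarrow> (a + c, b + d) \<in> S"
    "\<And>r a b. (a, b) \<in> S \<Longrightarrow> (r *\<^sub>R a, r *\<^sub>R b) \<in> S"
  shows "subspace S"
  unfolding subspace_def zero_prod_def using assms by auto

lemma subspace_null_space: assumes A: "subspace A" shows "subspace (null_space A)"
  unfolding null_space_def subspace_def
proof (intro conjI ballI allI)
  show "0 \<in> {x. (x, 0) \<in> A}" using sub_0[OF A] by simp
  fix x y assume "x \<in> {x. (x, 0) \<in> A}" "y \<in> {x. (x, 0) \<in> A}"
  then show "x + y \<in> {x. (x, 0) \<in> A}" using sub_add[OF A, of x 0 y 0] by simp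
next
  fix c :: real and x assume "x \<in> {x. (x, 0) \<in> A}"
  then show "c *\<^sub>R x \<in> {x. (x, 0) \<in> A}" using sub_scale[OF A, of x 0 c] by simp
qed

lemma closed_null_space: 
  fixes A :: "('a::real_normed_vector \<times> 'b::real_normed_vector) set"
  shows "closed A \<Longrightarrow> closed (null_space A)"
proof -
  assume "closed A"
  moreover have "null_space A = (\<lambda>x. (x, 0)) -` A" by (auto simp: null_space_def)
  ultimately show ?thesis by (auto intro!: continuous_closed_vimage continuous_intros)
qed

lemma is_op_fun: "is_op A \<Longrightarrow> (x, y) \<in> A \<Longrightarrow> (x, z) \<in> A \<Longrightarrow> y = z"
  unfolding is_op_def by blast

lemma adj_iff: "(y, z) \<in> adj A \<longleftrightarrow> (\<forall>x w. (x, w) \<in> A \<longrightarrow> inner w y = inner x z)"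
  by (simp add: adj_def)

lemma subspace_adj: "subspace (adj A)"
proof (rule subspace_pairI)
  show "(0, 0) \<in> adj A" by (simp add: adj_iff)
  show "(a + c, b + d) \<in> adj A" if "(a, b) \<in> adj A" "(c, d) \<in> adj A" for a b c d
    using that by (simp add: adj_iff inner_add_right)
  show "(r *\<^sub>R a, r *\<^sub>R b) \<in> adj A" if "(a, b) \<in> adj A" for r a b
    using that by (simp add: adj_iff)
qed

lemma closed_adj:
  fixes A :: "('a::real_inner \<times> 'b::real_inner) set"
  shows "closed (adj A)"
proof -
  have "adj A = (\<Inter>p\<in>A. {q. inner (snd p) (fst q) = inner (fst p) (snd q)})"
  proof (intro set_eqI iffI)
    fix q assume "q \<in> adj A"
    then show "q \<in> (\<Inter>p\<in>A. {q. inner (snd p) (fst q) = inner (fst p) (snd q)})"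
      by (cases q) (auto simp: adj_iff)
  next
    fix q assume "q \<in> (\<Inter>p\<in>A. {q. inner (snd p) (fst q) = inner (fst p) (snd q)})"
    then show "q \<in> adj A" by (cases q) (force simp: adj_iff)
  qed
  moreover have "closed {q::'b\<times>'a. inner (snd p) (fst q) = inner (fst p) (snd q)}" for p :: "'a\<times>'b"
    by (intro closed_Collect_eq continuous_intros)
  ultimately show ?thesis by auto
qed

lemma is_op_adj:
  fixes A :: "('a::real_inner \<times> 'b::real_inner) set"
  assumes "closure (Domain A) = UNIV"
  shows "is_op (adj A)"
  unfolding is_op_def
proof (intro conjI allI impI subspace_adj)
  fix y z1 z2 assume h: "(y, z1) \<in> adj A" "(y, z2) \<in> adj A"
  have "inner x (z1 - z2) = 0" if "x \<in> Domain A" for x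
    using h that by (auto simp: adj_def inner_diff_right)
  then have "Domain A \<subseteq> {x. inner x (z1 - z2) = 0}" by blast
  moreover have "closed {x. inner x (z1 - z2) = 0}" by (intro closed_Collect_eq continuous_intros)
  ultimately have "closure (Domain A) \<subseteq> {x. inner x (z1 - z2) = 0}" by (rule closure_minimal)
  then have "inner (z1 - z2) (z1 - z2) = 0" using assms by blast
  then show "z1 = z2" by simp
qed

lemma adj_adj:
  fixes A :: "('a::{real_inner,complete_space} \<times> 'b::{real_inner,complete_space}) set"
  assumes sA: "subspace A"
  shows "adj (adj A) = closure A"
proof
  have "A \<subseteq> adj (adj A)"
  proof
    fix p assume p: "p \<in> A"
    obtain a b where ab: "p = (a, b)" by (cases p)
    have "inner w a = inner x b" if "(x, w) \<in> adj A" for x w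
      using that p ab by (auto simp: adj_iff inner_commute)
    then show "p \<in> adj (adj A)" using ab by (simp add: adj_iff)
  qed
  then show "closure A \<subseteq> adj (adj A)" using closed_adj by (rule closure_minimal)
next
  show "adj (adj A) \<subseteq> closure A"
  proof
    fix p assume p: "p \<in> adj (adj A)"
    obtain u v where uv: "p = (u, v)" by (cases p)
    define C where "C = closure A"
    have sC: "subspace C" "closed C" using subspace_closure_real[OF sA] by (auto simp: C_def)
    define q where "q = p - orth_proj C p"
    have qperp: "q \<in> orthogonal_comp C" using orth_proj[OF sC] by (simp add: q_def)
    then have qA: "q \<in> orthogonal_comp A" using orthogonal_comp_closure by (metis C_def)
    obtain q1 q2 where q: "q = (q1, q2)" by (cases q)
    have "(q2, - q1) \<in> adj A"
    proof -
      have "inner w q2 = inner x (- q1)" if "(x, w) \<in> A" for x w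
      proof -
        have "inner (x, w) (q1, q2) = 0" using qA that unfolding in_perp_iff q by blast
        then show ?thesis by (simp add: inner_commute)
      qed
      then show ?thesis by (simp add: adj_def)
    qed
    moreover have "\<forall>x w. (x, w) \<in> adj A \<longrightarrow> inner w u = inner x v" using p uv by (simp add: adj_iff)
    ultimately have "inner (- q1) u = inner q2 v" by blast
    then have "inner p q = 0" using uv q by (simp add: inner_commute)
    moreover have "inner (orth_proj C p) q = 0" using qperp orth_proj(1)[OF sC] by (simp add: in_perp_iff)
    ultimately have "inner q q = 0" by (simp add: q_def inner_diff_left)
    then have "p = orth_proj C p" by (simp add: q_def)
    then show "p \<in> closure A" using orth_proj(1)[OF sC] C_def by metis
  qed
qed

lemma adj_adj_closed:
  fixes A :: "('a::{real_inner,complete_space} \<times> 'b::{real_inner,complete_space}) set"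
  assumes "subspace A" "closed A"
  shows "adj (adj A) = A"
  using adj_adj[OF assms(1)] assms(2) closure_closed by simp

lemma null_space_adj:
  "null_space (adj A) = orthogonal_comp (Range A)"
proof (intro set_eqI iffI)
  fix x assume "x \<in> null_space (adj A)"
  then have h: "\<forall>u w. (u, w) \<in> A \<longrightarrow> inner w x = 0" by (simp add: null_space_def adj_iff)
  have "inner y x = 0" if "y \<in> Range A" for y using that h by blast
  then show "x \<in> orthogonal_comp (Range A)" unfolding in_perp_iff by blast
next
  fix x assume "x \<in> orthogonal_comp (Range A)"
  then have "\<forall>u w. (u, w) \<in> A \<longrightarrow> inner w x = 0" unfolding in_perp_iff by blast
  then show "x \<in> null_space (adj A)" by (simp add: null_space_def adj_iff)
qed

lemma null_space_closed_op:
  fixes A :: "('a::{real_inner,complete_space} \<times> 'b::{real_inner,complete_space}) set"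
  assumes "subspace A" "closed A"
  shows "null_space A = orthogonal_comp (Range (adj A))"
proof -
  have "adj (adj A) = A" by (rule adj_adj_closed[OF assms])
  then have "null_space A = null_space (adj (adj A))" by simp
  also have "\<dots> = orthogonal_comp (Range (adj A))" by (rule null_space_adj)
  finally show ?thesis .
qed

lemma dense_adj_domain:
  fixes A :: "('a::{real_inner,complete_space} \<times> 'b::{real_inner,complete_space}) set"
  assumes "is_op A" "closed A"
  shows "closure (Domain (adj A)) = UNIV"
proof (rule perp_zero_dense)
  show "subspace (Domain (adj A))" by (rule subspace_Domain[OF subspace_adj])
  show "orthogonal_comp (Domain (adj A)) \<subseteq> {0}"
  proof
    fix k assume k: "k \<in> orthogonal_comp (Domain (adj A))"
    have "\<forall>y z. (y, z) \<in> adj A \<longrightarrow> inner z 0 = inner y k"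
    proof (intro allI impI)
      fix y z assume "(y, z) \<in> adj A"
      then have "y \<in> Domain (adj A)" by blast
      then have "inner y k = 0" using k unfolding in_perp_iff by blast
      then show "inner z 0 = inner y k" by simp
    qed
    then have "(0, k) \<in> adj (adj A)" by (simp add: adj_iff)
    moreover have sA: "subspace A" using assms(1) unfolding is_op_def by simp
    have "adj (adj A) = A" by (rule adj_adj_closed[OF sA assms(2)])
    ultimately have "(0, k) \<in> A" by simp
    moreover have "(0, 0) \<in> A" using sA by (rule sub_0)
    ultimately have "k = 0" using is_op_fun[OF assms(1)] by blast
    then show "k \<in> {0}" by simp
  qed
qed

lemma adj_mono: "A \<subseteq> B \<Longrightarrow> adj B \<subseteq> adj A"
  by (auto simp: adj_def)

lemma op_mult_subspace:
  assumes "subspace A" "subspace B"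
  shows "subspace (op_mult A B)"
proof (rule subspace_pairI)
  show "(0, 0) \<in> op_mult A B" using sub_0[OF assms(1)] sub_0[OF assms(2)] by (auto simp: op_mult_def)
  show "(a + c, b + d) \<in> op_mult A B" if h: "(a, b) \<in> op_mult A B" "(c, d) \<in> op_mult A B" for a b c d
  proof -
    obtain y1 where "(a, y1) \<in> B" "(y1, b) \<in> A" using h(1) by (auto simp: op_mult_def)
    moreover obtain y2 where "(c, y2) \<in> B" "(y2, d) \<in> A" using h(2) by (auto simp: op_mult_def)
    ultimately have "(a + c, y1 + y2) \<in> B" "(y1 + y2, b + d) \<in> A"
      using sub_add[OF assms(1)] sub_add[OF assms(2)] by auto
    then show ?thesis by (auto simp: op_mult_def)
  qed
  show "(r *\<^sub>R a, r *\<^sub>R b) \<in> op_mult A B" if h: "(a, b) \<in> op_mult A B" for r a b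
  proof -
    obtain y1 where "(a, y1) \<in> B" "(y1, b) \<in> A" using h by (auto simp: op_mult_def)
    then have "(r *\<^sub>R a, r *\<^sub>R y1) \<in> B" "(r *\<^sub>R y1, r *\<^sub>R b) \<in> A"
      using sub_scale[OF assms(1)] sub_scale[OF assms(2)] by auto
    then show ?thesis by (auto simp: op_mult_def)
  qed
qed

lemma op_mult_is_op:
  assumes "is_op A" "is_op B"
  shows "is_op (op_mult A B)"
  unfolding is_op_def
proof (intro conjI allI impI)
  have "subspace A" "subspace B" using assms by (simp_all add: is_op_def)
  then show "subspace (op_mult A B)" by (rule op_mult_subspace)
  fix x y z assume "(x, y) \<in> op_mult A B" "(x, z) \<in> op_mult A B"
  then obtain u v where "(x, u) \<in> B" "(u, y) \<in> A" "(x, v) \<in> B" "(v, z) \<in> A"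
    unfolding op_mult_def by blast
  then have "u = v" using is_op_fun[OF assms(2)] by blast
  then show "y = z" using is_op_fun[OF assms(1)] \<open>(u, y) \<in> A\<close> \<open>(v, z) \<in> A\<close> by blast
qed

lemma is_op_00: "is_op A \<Longrightarrow> (0, 0) \<in> A"
  unfolding is_op_def by (simp add: sub_0)

lemma fun_ext_graph:
  assumes "G \<subseteq> F" "Domain G = UNIV" "\<And>x y z. (x, y) \<in> F \<Longrightarrow> (x, z) \<in> F \<Longrightarrow> y = z"
  shows "F = G"
proof
  show "F \<subseteq> G"
  proof
    fix p assume "p \<in> F"
    obtain x y where p: "p = (x, y)" by (cases p)
    obtain z where "(x, z) \<in> G" using assms(2) by blast
    then show "p \<in> G" using assms(1,3) \<open>p \<in> F\<close> p by blast
  qed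
qed (rule assms(1))


lemma ubp:
  fixes f :: "'i \<Rightarrow> 'a::{real_normed_vector,complete_space} \<Rightarrow> real"
  assumes bl: "\<And>i. bounded_linear (f i)" and pw: "\<And>x. \<exists>B. \<forall>i. \<bar>f i x\<bar> \<le> B"
  shows "\<exists>M. \<forall>i x. \<bar>f i x\<bar> \<le> M * norm x"
proof -
  define E where "E n = {x. \<forall>i. \<bar>f i x\<bar> \<le> real n}" for n :: nat
  have cE: "closed (E n)" for n
  proof -
    have "E n = (\<Inter>i. {x. \<bar>f i x\<bar> \<le> real n})" by (auto simp: E_def)
    moreover have "closed {x. \<bar>f i x\<bar> \<le> real n}" for i
    proof -
      have "continuous_on UNIV (f i)" by (rule linear_continuous_on[OF bl])
      then have "continuous_on UNIV (\<lambda>x. \<bar>f i x\<bar>)" by (rule continuous_on_rabs)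
      then show ?thesis by (rule closed_Collect_le[OF _ continuous_on_const])
    qed
    ultimately show ?thesis by auto
  qed
  have cover: "\<Union>(range E) = UNIV"
  proof -
    have inE: "x \<in> E (nat \<lceil>B\<rceil>)" if h: "\<forall>i. \<bar>f i x\<bar> \<le> B" for x B
    proof -
      have "B \<le> real (nat \<lceil>B\<rceil>)" by linarith
      then have "\<forall>i. \<bar>f i x\<bar> \<le> real (nat \<lceil>B\<rceil>)" using h by (meson order_trans)
      then show ?thesis unfolding E_def by blast
    qed
    show ?thesis
    proof (intro set_eqI iffI)
      fix x :: 'a
      obtain B where "\<forall>i. \<bar>f i x\<bar> \<le> B" using pw by blast
      then have "x \<in> E (nat \<lceil>B\<rceil>)" by (rule inE)
      then show "x \<in> \<Union>(range E)" by blast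
    qed simp
  qed
  have "\<exists>n. interior (E n) \<noteq> {}"
  proof (rule ccontr)
    assume "\<not> ?thesis"
    have "euclidean interior_of \<Union>(range E) = {}"
    proof (rule Baire_category_alt)
      show "completely_metrizable_space (euclidean::'a topology) \<or> locally_compact_space (euclidean::'a topology) \<and> regular_space (euclidean::'a topology)"
        using completely_metrizable_space_euclidean by blast
      show "countable (range E)" by simp
      show "closedin euclidean T \<and> euclidean interior_of T = {}" if "T \<in> range E" for T
      proof -
        obtain m where m: "T = E m" using \<open>T \<in> range E\<close> by blast
        have "interior (E m) = {}" using \<open>\<not> (\<exists>n. interior (E n) \<noteq> {})\<close> by blast
        moreover have "closedin euclidean (E m)" using cE[of m] closed_closedin by blast
        ultimately show ?thesis using m by simp
      qed
    qed
    then show False using cover by simp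
  qed
  then obtain n x0 where "x0 \<in> interior (E n)" by blast
  moreover have "open (interior (E n))" by (rule open_interior)
  ultimately obtain r where r0: "r > 0" "ball x0 r \<subseteq> interior (E n)"
    unfolding open_contains_ball by blast
  then have r: "r > 0" "ball x0 r \<subseteq> E n" using interior_subset by blast+
  have x0E: "x0 \<in> E n" using r by auto
  have "\<bar>f i x\<bar> \<le> (4 * real n / r) * norm x" for i x
  proof (cases "x = 0")
    case True
    then show ?thesis using bl[of i] by (simp add: linear_simps)
  next
    case False
    define t where "t = r / (2 * norm x)"
    have t: "t > 0" using r False by (simp add: t_def)
    have "norm (t *\<^sub>R x) = r/2" using False r by (simp add: t_def)
    then have "x0 + t *\<^sub>R x \<in> ball x0 r" using r by (simp add: dist_norm)
    then have "x0 + t *\<^sub>R x \<in> E n" using r(2) by (rule subsetD[rotated])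
    then have "\<bar>f i (x0 + t *\<^sub>R x)\<bar> \<le> real n" unfolding E_def by blast
    moreover have "\<bar>f i x0\<bar> \<le> real n" using x0E unfolding E_def by blast
    moreover have "f i (x0 + t *\<^sub>R x) = f i x0 + t * f i x"
      using bl[of i] by (simp add: linear_simps)
    ultimately have "\<bar>t * f i x\<bar> \<le> 2 * real n" by linarith
    then have "t * \<bar>f i x\<bar> \<le> 2 * real n" using t by (simp add: abs_mult)
    then have "\<bar>f i x\<bar> \<le> 2 * real n / t" using t by (simp add: field_simps)
    also have "2 * real n / t = (4 * real n / r) * norm x" using r False by (simp add: t_def field_simps)
    finally show ?thesis .
  qed
  then show ?thesis by blast
qed

lemma riesz:
  fixes f :: "'a::{real_inner,complete_space} \<Rightarrow> real"
  assumes bl: "bounded_linear f"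
  shows "\<exists>k. \<forall>x. f x = inner x k"
proof -
  define K where "K = {x. f x = 0}"
  have sK: "subspace K" unfolding K_def subspace_def using bl by (simp add: linear_simps)
  have cK: "closed K" unfolding K_def using bl
    by (intro closed_Collect_eq continuous_intros) (simp add: linear_continuous_on)
  show ?thesis
  proof (cases "K = UNIV")
    case True
    then show ?thesis by (intro exI[of _ 0]) (auto simp: K_def)
  next
    case False
    then obtain u where u: "f u \<noteq> 0" by (auto simp: K_def)
    define q where "q = u - orth_proj K u"
    have qK: "q \<in> orthogonal_comp K" using orth_proj[OF sK cK] by (simp add: q_def)
    have "f (orth_proj K u) = 0" using orth_proj(1)[OF sK cK] by (simp add: K_def)
    then have fq: "f q = f u" using bl by (simp add: q_def linear_simps)
    then have q0: "q \<noteq> 0" using u bl by (auto simp: linear_simps)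
    define k where "k = (f q / (norm q)^2) *\<^sub>R q"
    have "f x = inner x k" for x
    proof -
      have "f (x - (f x / f q) *\<^sub>R q) = 0" using bl fq u by (simp add: linear_simps)
      then have "x - (f x / f q) *\<^sub>R q \<in> K" by (simp add: K_def)
      then have "inner (x - (f x / f q) *\<^sub>R q) q = 0" using qK by (simp add: in_perp_iff)
      then have "inner x q = (f x / f q) * (norm q)^2" by (simp add: inner_diff_left power2_norm_eq_inner)
      then show ?thesis using q0 fq u by (simp add: k_def field_simps)
    qed
    then show ?thesis by blast
  qed
qed

definition op_fun :: "('a \<times> 'b) set \<Rightarrow> 'a \<Rightarrow> 'b" where
  "op_fun G x = (THE y. (x, y) \<in> G)"

lemma op_fun:
  assumes "is_op G" "x \<in> Domain G"
  shows "(x, op_fun G x) \<in> G"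
proof -
  obtain y where y: "(x, y) \<in> G" using assms(2) by blast
  have "op_fun G x = y" unfolding op_fun_def
  proof (rule the_equality)
    show "(x, y) \<in> G" by (rule y)
    show "z = y" if "(x, z) \<in> G" for z using is_op_fun[OF assms(1) that y] .
  qed
  then show ?thesis using y by simp
qed

lemma op_fun_eq:
  assumes "is_op G" "(x, y) \<in> G"
  shows "op_fun G x = y"
proof -
  have "x \<in> Domain G" using assms(2) by blast
  from op_fun[OF assms(1) this] show ?thesis using is_op_fun[OF assms(1)] assms(2) by blast
qed

lemma linear_op_fun:
  assumes "is_op G" "Domain G = UNIV"
  shows "linear (op_fun G)"
proof (rule linearI)
  have sG: "subspace G" using assms(1) by (simp add: is_op_def)
  fix x y :: 'a
  have "(x + y, op_fun G x + op_fun G y) \<in> G"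
    using sub_add[OF sG op_fun[OF assms(1)] op_fun[OF assms(1)]] assms(2) by blast
  then show "op_fun G (x + y) = op_fun G x + op_fun G y" by (rule op_fun_eq[OF assms(1)])
next
  have sG: "subspace G" using assms(1) by (simp add: is_op_def)
  fix c :: real and x :: 'a
  have "(c *\<^sub>R x, c *\<^sub>R op_fun G x) \<in> G"
    using sub_scale[OF sG op_fun[OF assms(1)]] assms(2) by blast
  then show "op_fun G (c *\<^sub>R x) = c *\<^sub>R op_fun G x" by (rule op_fun_eq[OF assms(1)])
qed

lemma bounded_linear_op_fun:
  assumes "is_op G" "Domain G = UNIV" "bounded_op G"
  shows "bounded_linear (op_fun G)"
proof -
  obtain C where C: "\<And>x y. (x, y) \<in> G \<Longrightarrow> norm y \<le> C * norm x" using assms(3) by (auto simp: bounded_op_def)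
  have "norm (op_fun G x) \<le> norm x * C" for x using C[OF op_fun[OF assms(1)]] assms(2) by (simp add: mult.commute)
  moreover note lin = linear_op_fun[OF assms(1,2)]
  ultimately show ?thesis
    by (intro bounded_linear_intro[where K=C]) (auto simp: linear_add[OF lin] linear_scale[OF lin])
qed


lemma carrier_iff: "c \<in> carrier_op A \<longleftrightarrow> c \<in> Domain A \<and> c \<in> orthogonal_comp (null_space A)"
  by (simp add: carrier_op_def)

lemma is_op_sub: "is_op A \<Longrightarrow> subspace A"
  by (simp add: is_op_def)

lemma carrier_exists:
  fixes A :: "('a::{real_inner,complete_space} \<times> 'b::{real_inner,complete_space}) set"
  assumes "is_op A" "closed A" "(x, y) \<in> A"
  shows "\<exists>c. (c, y) \<in> A \<and> c \<in> carrier_op A \<and> x - c \<in> null_space A"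
proof -
  have sA: "subspace A" using assms(1) by (rule is_op_sub)
  define N where "N = null_space A"
  have sN: "subspace N" "closed N" using subspace_null_space[OF sA] closed_null_space[OF assms(2)]
    by (auto simp: N_def)
  define n where "n = orth_proj N x"
  have nN: "n \<in> N" using orth_proj(1)[OF sN] by (simp add: n_def)
  then have n0: "(n, 0) \<in> A" by (simp add: N_def null_space_def)
  have cA: "(x - n, y) \<in> A" using sub_diff[OF sA assms(3) n0] by simp
  moreover have "x - n \<in> orthogonal_comp N" using orth_proj(2)[OF sN] by (simp add: n_def)
  ultimately show ?thesis using nN by (intro exI[of _ "x - n"]) (auto simp: carrier_iff N_def)
qed

lemma carrier_unique:
  fixes A :: "('a::real_inner \<times> 'b::real_inner) set"
  assumes "is_op A" "c \<in> carrier_op A" "c' \<in> carrier_op A" "(c, y) \<in> A" "(c', y) \<in> A"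
  shows "c = c'"
proof -
  have sA: "subspace A" using assms(1) by (rule is_op_sub)
  have "(c - c', 0) \<in> A" using sub_diff[OF sA assms(4,5)] by simp
  then have "c - c' \<in> null_space A" by (simp add: null_space_def)
  moreover have "c - c' \<in> orthogonal_comp (null_space A)"
    using assms(2,3) subspace_diff[OF subspace_orthogonal_comp] by (auto simp: carrier_iff)
  ultimately have "c - c' \<in> null_space A \<inter> orthogonal_comp (null_space A)" by blast
  then show ?thesis using orthogonal_Int_0[OF subspace_null_space[OF sA]] by simp
qed

lemma mp_inv_mem: "(y, x) \<in> mp_inv A \<longleftrightarrow> (\<exists>y1 y2. y = y1 + y2 \<and> (x, y1) \<in> A \<and> x \<in> carrier_op A \<and> y2 \<in> orthogonal_comp (Range A))"
  unfolding mp_inv_def by blast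

lemma mp_inv_iff:
  fixes A :: "('a::{real_inner,complete_space} \<times> 'b::{real_inner,complete_space}) set"
  assumes "is_op A" "closed (Range A)"
  shows "(y, x) \<in> mp_inv A \<longleftrightarrow> x \<in> carrier_op A \<and> (x, orth_proj (Range A) y) \<in> A"
proof -
  have sR: "subspace (Range A)" using subspace_Range[OF is_op_sub[OF assms(1)]] .
  note cR = assms(2)
  show ?thesis
  proof
    assume "(y, x) \<in> mp_inv A"
    then obtain y1 y2 where h: "y = y1 + y2" "(x, y1) \<in> A" "x \<in> carrier_op A" "y2 \<in> orthogonal_comp (Range A)"
      unfolding mp_inv_mem by blast
    have "orth_proj (Range A) y = y1"
      using h by (intro orth_proj_unique[OF sR cR]) auto
    then show "x \<in> carrier_op A \<and> (x, orth_proj (Range A) y) \<in> A" using h by simp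
  next
    assume h: "x \<in> carrier_op A \<and> (x, orth_proj (Range A) y) \<in> A"
    have "y = orth_proj (Range A) y + (y - orth_proj (Range A) y)" by simp
    moreover have "y - orth_proj (Range A) y \<in> orthogonal_comp (Range A)" by (rule orth_proj(2)[OF sR cR])
    ultimately show "(y, x) \<in> mp_inv A" using h unfolding mp_inv_mem by blast
  qed
qed

lemma mp_inv_is_op:
  fixes A :: "('a::real_inner \<times> 'b::real_inner) set"
  assumes op: "is_op A"
  shows "is_op (mp_inv A)"
proof -
  have sA: "subspace A" using op by (rule is_op_sub)
  have sR: "subspace (Range A)" by (rule subspace_Range[OF sA])
  have sN: "subspace (orthogonal_comp (null_space A))" by (rule subspace_orthogonal_comp)
  have sRp: "subspace (orthogonal_comp (Range A))" by (rule subspace_orthogonal_comp)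
  have sD: "subspace (Domain A)" by (rule subspace_Domain[OF sA])
  have sC: "subspace (carrier_op A)" unfolding carrier_op_def using sD sN by (rule subspace_inter)
  have "subspace (mp_inv A)"
  proof (rule subspace_pairI)
    show "(0, 0) \<in> mp_inv A" unfolding mp_inv_mem
      using sub_0[OF sA] subspace_0[OF sC] subspace_0[OF sRp] by (intro exI[of _ 0]) auto
  next
    fix a b c d assume "(a, b) \<in> mp_inv A" "(c, d) \<in> mp_inv A"
    then obtain a1 a2 c1 c2 where h: "a = a1 + a2" "(b, a1) \<in> A" "b \<in> carrier_op A" "a2 \<in> orthogonal_comp (Range A)"
      "c = c1 + c2" "(d, c1) \<in> A" "d \<in> carrier_op A" "c2 \<in> orthogonal_comp (Range A)"
      unfolding mp_inv_mem by metis
    have "a + c = (a1 + c1) + (a2 + c2)" using h by simp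
    moreover have "(b + d, a1 + c1) \<in> A" using sub_add[OF sA h(2) h(6)] .
    moreover have "b + d \<in> carrier_op A" using subspace_add[OF sC h(3) h(7)] .
    moreover have "a2 + c2 \<in> orthogonal_comp (Range A)" using subspace_add[OF sRp h(4) h(8)] .
    ultimately show "(a + c, b + d) \<in> mp_inv A" unfolding mp_inv_mem by blast
  next
    fix r :: real and a b assume "(a, b) \<in> mp_inv A"
    then obtain a1 a2 where h: "a = a1 + a2" "(b, a1) \<in> A" "b \<in> carrier_op A" "a2 \<in> orthogonal_comp (Range A)"
      unfolding mp_inv_mem by metis
    have "r *\<^sub>R a = r *\<^sub>R a1 + r *\<^sub>R a2" using h by (simp add: scaleR_add_right)
    moreover have "(r *\<^sub>R b, r *\<^sub>R a1) \<in> A" using sub_scale[OF sA h(2)] .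
    moreover have "r *\<^sub>R b \<in> carrier_op A" using subspace_scale[OF sC h(3)] .
    moreover have "r *\<^sub>R a2 \<in> orthogonal_comp (Range A)" using subspace_scale[OF sRp h(4)] .
    ultimately show "(r *\<^sub>R a, r *\<^sub>R b) \<in> mp_inv A" unfolding mp_inv_mem by blast
  qed
  moreover have "x = x'" if hh: "(y, x) \<in> mp_inv A" "(y, x') \<in> mp_inv A" for y x x'
  proof -
    obtain a1 a2 where h: "y = a1 + a2" "(x, a1) \<in> A" "x \<in> carrier_op A" "a2 \<in> orthogonal_comp (Range A)"
      using hh(1) unfolding mp_inv_mem by metis
    obtain c1 c2 where h': "y = c1 + c2" "(x', c1) \<in> A" "x' \<in> carrier_op A" "c2 \<in> orthogonal_comp (Range A)"
      using hh(2) unfolding mp_inv_mem by metis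
    have "a1 - c1 \<in> Range A" using h(2) h'(2) subspace_diff[OF sR] by blast
    moreover have "a1 - c1 = c2 - a2" using h(1) h'(1) by (simp add: algebra_simps)
    then have "a1 - c1 \<in> orthogonal_comp (Range A)" using h(4) h'(4) subspace_diff[OF sRp] by metis
    ultimately have "a1 - c1 \<in> Range A \<inter> orthogonal_comp (Range A)" by blast
    then have "a1 = c1" using orthogonal_Int_0[OF sR] by simp
    then show "x = x'" using carrier_unique[OF op h(3) h'(3) h(2)] h'(2) by simp
  qed
  ultimately show ?thesis unfolding is_op_def by blast
qed

lemma mp_inv_on_range:
  assumes "(c, y) \<in> A" "c \<in> carrier_op A"
  shows "(y, c) \<in> mp_inv A"
  unfolding mp_inv_mem using assms by (intro exI[of _ y] exI[of _ 0]) (auto simp: in_perp_iff)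

lemma mp_inv_range: "(y, x) \<in> mp_inv A \<Longrightarrow> x \<in> carrier_op A"
  unfolding mp_inv_mem by blast

lemma mp_inv_dom:
  fixes A :: "('a::{real_inner,complete_space} \<times> 'b::{real_inner,complete_space}) set"
  assumes "is_op A" "closed A" "closed (Range A)"
  shows "Domain (mp_inv A) = UNIV"
proof -
  have sR: "subspace (Range A)" using subspace_Range[OF is_op_sub[OF assms(1)]] .
  have "y \<in> Domain (mp_inv A)" for y
  proof -
    have "orth_proj (Range A) y \<in> Range A" by (rule orth_proj(1)[OF sR assms(3)])
    then obtain x where "(x, orth_proj (Range A) y) \<in> A" by blast
    then obtain c where "(c, orth_proj (Range A) y) \<in> A" "c \<in> carrier_op A"
      using carrier_exists[OF assms(1,2)] by blast
    then have "(y, c) \<in> mp_inv A" using mp_inv_iff[OF assms(1,3)] by blast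
    then show ?thesis by blast
  qed
  then show ?thesis by blast
qed


lemma bb:
  fixes A :: "('a::{real_inner,complete_space} \<times> 'b::{real_inner,complete_space}) set"
  assumes op: "is_op A" and cA: "closed A" and cR: "closed (Range A)"
  shows "\<exists>M\<ge>0. \<forall>x y. (x, y) \<in> A \<longrightarrow> x \<in> orthogonal_comp (null_space A) \<longrightarrow> norm x \<le> M * norm y"
proof -
  have sA: "subspace A" using op by (rule is_op_sub)
  have sR: "subspace (Range A)" by (rule subspace_Range[OF sA])
  define P where "P = orth_proj (Range A)"
  have blP: "bounded_linear P" unfolding P_def by (rule bounded_linear_orth_proj[OF sR cR])
  define F where "F k \<longleftrightarrow> (\<exists>z. (k, z) \<in> adj A \<and> norm z \<le> 1)" for k
  define f where "f k y = (if F k then inner (P y) k else 0)" for k y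
  have bl: "bounded_linear (f k)" for k
  proof (cases "F k")
    case True
    have "bounded_linear (\<lambda>y. inner (P y) k)"
      by (rule bounded_linear_compose[OF bounded_linear_inner_left blP])
    moreover have "f k = (\<lambda>y. inner (P y) k)" using True by (simp add: f_def fun_eq_iff)
    ultimately show ?thesis by simp
  next
    case False
    then have "f k = (\<lambda>y. 0)" by (simp add: f_def fun_eq_iff)
    then show ?thesis by (simp add: bounded_linear_zero)
  qed
  have pw: "\<exists>B. \<forall>k. \<bar>f k y\<bar> \<le> B" for y
  proof -
    have "P y \<in> Range A" unfolding P_def by (rule orth_proj(1)[OF sR cR])
    then obtain x where x: "(x, P y) \<in> A" by blast
    have "\<bar>f k y\<bar> \<le> norm x" for k
    proof (cases "F k")
      case True
      then obtain z where z: "(k, z) \<in> adj A" "norm z \<le> 1" by (auto simp: F_def)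
      have "inner (P y) k = inner x z" using z(1) x by (simp add: adj_iff)
      moreover have "\<bar>inner x z\<bar> \<le> norm x * norm z" by (rule Cauchy_Schwarz_ineq2)
      moreover have "norm x * norm z \<le> norm x" using z(2) by (simp add: mult_left_le)
      ultimately show ?thesis using True by (simp add: f_def)
    next
      case False
      then show ?thesis by (simp add: f_def)
    qed
    then show ?thesis by blast
  qed
  obtain M0 where M0: "\<And>k y. \<bar>f k y\<bar> \<le> M0 * norm y" using ubp[OF bl pw] by blast
  define M where "M = max M0 0"
  have M: "\<bar>f k y\<bar> \<le> M * norm y" for k y
  proof -
    have "M0 * norm y \<le> M * norm y" by (simp add: M_def mult_right_mono)
    then show ?thesis using M0[of k y] by linarith
  qed
  have M0': "M \<ge> 0" by (simp add: M_def)
  have key: "\<bar>inner y k\<bar> \<le> M * norm y * norm z" if y: "y \<in> Range A" and kz: "(k, z) \<in> adj A" for y k z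
  proof (cases "z = 0")
    case True
    then have "k \<in> null_space (adj A)" using kz by (simp add: null_space_def)
    then have "k \<in> orthogonal_comp (Range A)" by (simp add: null_space_adj)
    then have "inner y k = 0" using y by (simp add: in_perp_iff)
    then show ?thesis using M0' by simp
  next
    case False
    define t where "t = 1 / norm z"
    have t: "t > 0" using False by (simp add: t_def)
    have "(t *\<^sub>R k, t *\<^sub>R z) \<in> adj A" by (rule sub_scale[OF subspace_adj kz])
    moreover have "norm (t *\<^sub>R z) = 1" using False by (simp add: t_def)
    ultimately have "F (t *\<^sub>R k)" by (auto simp: F_def)
    then have "\<bar>inner (P y) (t *\<^sub>R k)\<bar> \<le> M * norm y" using M[of "t *\<^sub>R k" y] by (simp add: f_def)
    moreover have "P y = y" unfolding P_def by (rule orth_proj_id[OF sR cR y])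
    ultimately have "t * \<bar>inner y k\<bar> \<le> M * norm y" using t by (simp add: abs_mult)
    then have "\<bar>inner y k\<bar> \<le> M * norm y / t" using t by (simp add: field_simps)
    also have "M * norm y / t = M * norm y * norm z" by (simp add: t_def)
    finally show ?thesis .
  qed
  have "norm x \<le> M * norm y" if xy: "(x, y) \<in> A" and xN: "x \<in> orthogonal_comp (null_space A)" for x y
  proof -
    have yR: "y \<in> Range A" using xy by blast
    have sRa: "subspace (Range (adj A))" by (rule subspace_Range[OF subspace_adj])
    have "orthogonal_comp (null_space A) = closure (Range (adj A))"
      using null_space_closed_op[OF sA cA] perp_perp[OF sRa] by simp
    then have xcl: "x \<in> closure (Range (adj A))" using xN by simp
    have "Range (adj A) \<subseteq> {z. \<bar>inner x z\<bar> \<le> M * norm y * norm z}"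
    proof
      fix z assume "z \<in> Range (adj A)"
      then obtain k where kz: "(k, z) \<in> adj A" by blast
      have "inner y k = inner x z" using kz xy by (simp add: adj_iff)
      then show "z \<in> {z. \<bar>inner x z\<bar> \<le> M * norm y * norm z}" using key[OF yR kz] by simp
    qed
    moreover have "closed {z. \<bar>inner x z\<bar> \<le> M * norm y * norm z}"
    proof (rule closed_Collect_le)
      show "continuous_on UNIV (\<lambda>z. \<bar>inner x z\<bar>)"
        by (intro continuous_on_rabs continuous_on_inner continuous_on_const continuous_on_id)
      show "continuous_on UNIV (\<lambda>z. M * norm y * norm z)"
        by (intro continuous_on_mult continuous_on_const continuous_on_norm continuous_on_id)
    qed
    ultimately have "closure (Range (adj A)) \<subseteq> {z. \<bar>inner x z\<bar> \<le> M * norm y * norm z}"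
      by (rule closure_minimal)
    then have "\<bar>inner x x\<bar> \<le> M * norm y * norm x" using xcl by blast
    then have "norm x * norm x \<le> (M * norm y) * norm x" by (simp add: power2_norm_eq_inner[symmetric] power2_eq_square)
    then show "norm x \<le> M * norm y"
      using M0' by (cases "x = 0") (auto simp: mult_le_cancel_right)
  qed
  then show ?thesis using M0' by blast
qed

lemma bounded_mp_inv:
  fixes A :: "('a::{real_inner,complete_space} \<times> 'b::{real_inner,complete_space}) set"
  assumes op: "is_op A" and cA: "closed A" and cR: "closed (Range A)"
  shows "bounded_op (mp_inv A)"
proof -
  have sR: "subspace (Range A)" by (rule subspace_Range[OF is_op_sub[OF op]])
  obtain M where M: "M \<ge> 0" "\<And>x y. (x, y) \<in> A \<Longrightarrow> x \<in> orthogonal_comp (null_space A) \<Longrightarrow> norm x \<le> M * norm y"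
    using bb[OF assms] by blast
  have "norm x \<le> M * norm y" if "(y, x) \<in> mp_inv A" for y x
  proof -
    have "x \<in> carrier_op A" "(x, orth_proj (Range A) y) \<in> A" using that mp_inv_iff[OF op cR] by auto
    then have "norm x \<le> M * norm (orth_proj (Range A) y)" using M(2) by (auto simp: carrier_iff)
    also have "\<dots> \<le> M * norm y" using M(1) orth_proj_norm[OF sR cR] by (simp add: mult_left_mono)
    finally show ?thesis .
  qed
  then show ?thesis unfolding bounded_op_def by blast
qed

lemma range_adj:
  fixes T :: "('a::{real_inner,complete_space} \<times> 'b::{real_inner,complete_space}) set"
  assumes op: "is_op T" and cT: "closed T" and cR: "closed (Range T)"
  shows "Range (adj T) = orthogonal_comp (null_space T)"
proof
  show "Range (adj T) \<subseteq> orthogonal_comp (null_space T)"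
  proof
    fix h assume "h \<in> Range (adj T)"
    then obtain k where kh: "(k, h) \<in> adj T" by blast
    have "inner n h = 0" if "n \<in> null_space T" for n
    proof -
      have n0: "(n, 0) \<in> T" using that by (simp add: null_space_def)
      have "\<forall>x w. (x, w) \<in> T \<longrightarrow> inner w k = inner x h" using kh by (simp add: adj_iff)
      then have "inner 0 k = inner n h" using n0 by blast
      then show ?thesis by simp
    qed
    then show "h \<in> orthogonal_comp (null_space T)" by (simp add: in_perp_iff)
  qed
next
  show "orthogonal_comp (null_space T) \<subseteq> Range (adj T)"
  proof
    fix h assume hN: "h \<in> orthogonal_comp (null_space T)"
    have sT: "subspace T" using op by (rule is_op_sub)
    have sR: "subspace (Range T)" by (rule subspace_Range[OF sT])
    define G where "G = mp_inv T"
    have opG: "is_op G" unfolding G_def by (rule mp_inv_is_op[OF op])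
    have domG: "Domain G = UNIV" unfolding G_def by (rule mp_inv_dom[OF op cT cR])
    have bG: "bounded_op G" unfolding G_def by (rule bounded_mp_inv[OF op cT cR])
    define g where "g = op_fun G"
    have blg: "bounded_linear g" unfolding g_def by (rule bounded_linear_op_fun[OF opG domG bG])
    have "bounded_linear (\<lambda>y. inner (g y) h)"
      by (rule bounded_linear_compose[OF bounded_linear_inner_left blg])
    then obtain k where k: "\<And>y. inner (g y) h = inner y k" using riesz by blast
    have "inner w k = inner x h" if xw: "(x, w) \<in> T" for x w
    proof -
      have wG: "(w, g w) \<in> G" unfolding g_def using op_fun[OF opG] domG by blast
      then have c: "g w \<in> carrier_op T" "(g w, orth_proj (Range T) w) \<in> T"
        unfolding G_def using mp_inv_iff[OF op cR] by auto
      have "orth_proj (Range T) w = w" using xw by (intro orth_proj_id[OF sR cR]) blast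
      then have cw: "(g w, w) \<in> T" using c(2) by simp
      have "(x - g w, 0) \<in> T" using sub_diff[OF sT xw cw] by simp
      then have "x - g w \<in> null_space T" by (simp add: null_space_def)
      then have "inner (x - g w) h = 0" using hN by (simp add: in_perp_iff)
      then have "inner (g w) h = inner x h" by (simp add: inner_diff_left)
      then show ?thesis using k[of w] by simp
    qed
    then have "(k, h) \<in> adj T" by (simp add: adj_iff)
    then show "h \<in> Range (adj T)" by blast
  qed
qed


lemma carrier_exists':
  fixes A :: "('a::{real_inner,complete_space} \<times> 'b::{real_inner,complete_space}) set"
  assumes "is_op A" "closed (null_space A)" "(x, y) \<in> A"
  shows "\<exists>c. (c, y) \<in> A \<and> c \<in> carrier_op A"
proof -
  have sA: "subspace A" using assms(1) by (rule is_op_sub)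
  define N where "N = null_space A"
  have sN: "subspace N" "closed N" using subspace_null_space[OF sA] assms(2) by (auto simp: N_def)
  define n where "n = orth_proj N x"
  have nN: "n \<in> N" using orth_proj(1)[OF sN] by (simp add: n_def)
  then have n0: "(n, 0) \<in> A" by (simp add: N_def null_space_def)
  have cA: "(x - n, y) \<in> A" using sub_diff[OF sA assms(3) n0] by simp
  moreover have "x - n \<in> orthogonal_comp N" using orth_proj(2)[OF sN] by (simp add: n_def)
  ultimately show ?thesis by (intro exI[of _ "x - n"]) (auto simp: carrier_iff N_def)
qed

lemma mp_inv_dom':
  fixes A :: "('a::{real_inner,complete_space} \<times> 'b::{real_inner,complete_space}) set"
  assumes "is_op A" "closed (null_space A)" "closed (Range A)"
  shows "Domain (mp_inv A) = UNIV"
proof -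
  have sR: "subspace (Range A)" using subspace_Range[OF is_op_sub[OF assms(1)]] .
  have "y \<in> Domain (mp_inv A)" for y
  proof -
    have "orth_proj (Range A) y \<in> Range A" by (rule orth_proj(1)[OF sR assms(3)])
    then obtain x where "(x, orth_proj (Range A) y) \<in> A" by blast
    then obtain c where "(c, orth_proj (Range A) y) \<in> A" "c \<in> carrier_op A"
      using carrier_exists'[OF assms(1,2)] by blast
    then have "(y, c) \<in> mp_inv A" using mp_inv_iff[OF assms(1,3)] by blast
    then show ?thesis by blast
  qed
  then show ?thesis by blast
qed

lemma op_mult_mem: "(x, z) \<in> op_mult A B \<longleftrightarrow> (\<exists>y. (x, y) \<in> B \<and> (y, z) \<in> A)"
  by (simp add: op_mult_def)

lemma range_subset_carrier_adj:
  "Range S \<inter> Domain (adj S) \<subseteq> carrier_op (adj S)"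
proof
  fix y assume y: "y \<in> Range S \<inter> Domain (adj S)"
  have "y \<in> orthogonal_comp (orthogonal_comp (Range S))" using y orthogonal_comp_subset by blast
  then show "y \<in> carrier_op (adj S)" using y by (simp add: carrier_op_def null_space_adj)
qed

lemma range_BS:
  fixes S :: "('a::{real_inner,complete_space} \<times> 'b::{real_inner,complete_space}) set"
  assumes op: "is_op S" and cR: "closed (Range S)"
  shows "Range (op_mult (adj S) S) = Range (adj S)"
proof
  show "Range (op_mult (adj S) S) \<subseteq> Range (adj S)" by (auto simp: op_mult_def)
next
  show "Range (adj S) \<subseteq> Range (op_mult (adj S) S)"
  proof
    fix z assume "z \<in> Range (adj S)"
    then obtain y where yz: "(y, z) \<in> adj S" by blast
    have sR: "subspace (Range S)" by (rule subspace_Range[OF is_op_sub[OF op]])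
    define y1 where "y1 = orth_proj (Range S) y"
    have y1R: "y1 \<in> Range S" unfolding y1_def by (rule orth_proj(1)[OF sR cR])
    have "y - y1 \<in> orthogonal_comp (Range S)" unfolding y1_def by (rule orth_proj(2)[OF sR cR])
    then have "y - y1 \<in> null_space (adj S)" by (simp add: null_space_adj)
    then have "(y - y1, 0) \<in> adj S" by (simp add: null_space_def)
    from sub_diff[OF subspace_adj yz this] have "(y1, z) \<in> adj S" by simp
    moreover obtain x where "(x, y1) \<in> S" using y1R by blast
    ultimately have "(x, z) \<in> op_mult (adj S) S" by (auto simp: op_mult_def)
    then show "z \<in> Range (op_mult (adj S) S)" by blast
  qed
qed

lemma null_BS:
  fixes S :: "('a::real_inner \<times> 'b::real_inner) set"
  assumes op: "is_op S"
  shows "null_space (op_mult (adj S) S) = null_space S"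
proof (intro set_eqI iffI)
  fix x assume "x \<in> null_space (op_mult (adj S) S)"
  then obtain y where xy: "(x, y) \<in> S" "(y, 0) \<in> adj S" by (auto simp: null_space_def op_mult_def)
  have "\<forall>u w. (u, w) \<in> S \<longrightarrow> inner w y = inner u 0" using xy(2) by (simp add: adj_iff)
  then have "inner y y = 0" using xy(1) by fastforce
  then show "x \<in> null_space S" using xy(1) by (simp add: null_space_def)
next
  fix x assume "x \<in> null_space S"
  then have "(x, 0) \<in> S" by (simp add: null_space_def)
  moreover have "(0, 0) \<in> adj S" by (rule sub_0[OF subspace_adj])
  ultimately show "x \<in> null_space (op_mult (adj S) S)" by (auto simp: null_space_def op_mult_def)
qed

lemma cauchy_dual_eq:
  fixes S :: "('a::{real_inner,complete_space} \<times> 'b::{real_inner,complete_space}) set"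
  assumes op: "is_op S" and cS: "closed S" and opA: "is_op (adj S)"
    and cR: "closed (Range S)" and cRA: "closed (Range (adj S))"
  shows "cauchy_dual S = mp_inv (adj S)"
proof -
  define B where "B = op_mult (adj S) S"
  have opB: "is_op B" unfolding B_def by (rule op_mult_is_op[OF opA op])
  have RB: "Range B = Range (adj S)" unfolding B_def by (rule range_BS[OF op cR])
  have NB: "null_space B = null_space S" unfolding B_def by (rule null_BS[OF op])
  have cNB: "closed (null_space B)" using NB closed_null_space[OF cS] by simp
  have domB: "Domain (mp_inv B) = UNIV" using mp_inv_dom'[OF opB cNB] RB cRA by simp
  have cd: "cauchy_dual S = op_mult S (mp_inv B)" by (simp add: cauchy_dual_def B_def)
  show ?thesis
  proof (rule fun_ext_graph[symmetric])
    show "cauchy_dual S \<subseteq> mp_inv (adj S)"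
    proof
      fix p assume "p \<in> cauchy_dual S"
      then obtain h y u where p: "p = (h, y)" "(h, u) \<in> mp_inv B" "(u, y) \<in> S"
        unfolding cd op_mult_def by blast
      then obtain z1 z2 where h: "h = z1 + z2" "(u, z1) \<in> B" "z2 \<in> orthogonal_comp (Range B)"
        unfolding mp_inv_mem by blast
      obtain y' where y': "(u, y') \<in> S" "(y', z1) \<in> adj S" using h(2) unfolding B_def op_mult_def by blast
      have "y' = y" using is_op_fun[OF op y'(1) p(3)] .
      then have yz: "(y, z1) \<in> adj S" using y' by simp
      have yc: "y \<in> carrier_op (adj S)" using range_subset_carrier_adj[of S] p(3) yz by blast
      have "z2 \<in> orthogonal_comp (Range (adj S))" using h(3) RB by simp
      then show "p \<in> mp_inv (adj S)" unfolding p(1) mp_inv_mem using h(1) yz yc by blast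
    qed
    show "Domain (cauchy_dual S) = UNIV"
    proof -
      have "h \<in> Domain (cauchy_dual S)" for h
      proof -
        obtain u where u: "(h, u) \<in> mp_inv B" using domB by blast
        then have "u \<in> carrier_op B" by (rule mp_inv_range)
        then obtain z where "(u, z) \<in> B" by (auto simp: carrier_op_def)
        then obtain y where "(u, y) \<in> S" unfolding B_def op_mult_def by blast
        then show ?thesis using u unfolding cd op_mult_def by blast
      qed
      then show ?thesis by blast
    qed
    show "\<And>x y z. (x, y) \<in> mp_inv (adj S) \<Longrightarrow> (x, z) \<in> mp_inv (adj S) \<Longrightarrow> y = z"
      using is_op_fun[OF mp_inv_is_op[OF opA]] by blast
  qed
qed

lemma op_mult_mp_inv:
  fixes A :: "('a::{real_inner,complete_space} \<times> 'b::{real_inner,complete_space}) set"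
  assumes op: "is_op A" and cN: "closed (null_space A)"
  shows "op_mult A (mp_inv A) = proj_op (Range A)"
proof (intro set_eqI iffI)
  fix p assume "p \<in> op_mult A (mp_inv A)"
  then obtain h z x where p: "p = (h, z)" "(h, x) \<in> mp_inv A" "(x, z) \<in> A" unfolding op_mult_def by blast
  then obtain y1 y2 where h: "h = y1 + y2" "(x, y1) \<in> A" "y2 \<in> orthogonal_comp (Range A)"
    unfolding mp_inv_mem by blast
  have "z = y1" using is_op_fun[OF op p(3) h(2)] .
  then show "p \<in> proj_op (Range A)" using p(1) h by (auto simp: proj_op_def)
next
  fix p assume "p \<in> proj_op (Range A)"
  then obtain h z where p: "p = (h, z)" "z \<in> Range A" "h - z \<in> orthogonal_comp (Range A)"
    unfolding proj_op_def by blast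
  obtain x where "(x, z) \<in> A" using p(2) by blast
  then obtain c where c: "(c, z) \<in> A" "c \<in> carrier_op A" using carrier_exists'[OF op cN] by blast
  have "h = z + (h - z)" by simp
  then have "(h, c) \<in> mp_inv A" unfolding mp_inv_mem using c p(3) by blast
  then show "p \<in> op_mult A (mp_inv A)" using c(1) p(1) unfolding op_mult_def by blast
qed

lemma closed_proj_op:
  fixes V :: "'a::real_inner set"
  assumes "closed V"
  shows "closed (proj_op V)"
proof -
  have "proj_op V = (snd -` V) \<inter> ((\<lambda>p. fst p - snd p) -` orthogonal_comp V)"
    by (auto simp: proj_op_def)
  moreover have "closed ((\<lambda>p::'a\<times>'a. fst p - snd p) -` orthogonal_comp V)"
    by (rule continuous_closed_vimage[OF closed_orthogonal_comp]) (intro continuous_intros)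
  moreover have "closed (snd -` V :: ('a \<times> 'a) set)" by (rule closed_vimage_snd[OF assms])
  ultimately show ?thesis by (metis closed_Int)
qed

lemma proj_op_eq:
  fixes V :: "'a::{real_inner,complete_space} set"
  assumes "subspace V" "closed V"
  shows "proj_op V = {(x, orth_proj V x) | x. True}"
proof (intro set_eqI iffI)
  fix p assume "p \<in> proj_op V"
  then obtain x y where p: "p = (x, y)" "y \<in> V" "x - y \<in> orthogonal_comp V" by (auto simp: proj_op_def)
  then have "orth_proj V x = y" by (intro orth_proj_unique[OF assms])
  then show "p \<in> {(x, orth_proj V x) | x. True}" using p by blast
next
  fix p assume "p \<in> {(x, orth_proj V x) | x. True}"
  then show "p \<in> proj_op V" using orth_proj[OF assms] by (auto simp: proj_op_def)
qed


lemma closure_mp_inv_A: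
  fixes A :: "('a::{real_inner,complete_space} \<times> 'b::{real_inner,complete_space}) set"
  assumes op: "is_op A" and cA: "closed A" and dA: "closure (Domain A) = UNIV" and cR: "closed (Range A)"
  shows "closure (op_mult (mp_inv A) A) = proj_op (orthogonal_comp (null_space A))"
proof -
  have sA: "subspace A" using op by (rule is_op_sub)
  define N where "N = null_space A"
  have sN: "subspace N" and cN: "closed N"
    using subspace_null_space[OF sA] closed_null_space[OF cA] by (auto simp: N_def)
  define V where "V = orthogonal_comp N"
  have sV: "subspace V" and cV: "closed V"
    unfolding V_def by (rule subspace_orthogonal_comp, rule closed_orthogonal_comp)
  have VN: "orthogonal_comp V = N" unfolding V_def by (rule perp_perp_closed[OF sN cN])
  define P where "P = orth_proj V"
  have sR: "subspace (Range A)" by (rule subspace_Range[OF sA])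
  have fwd: "c = P x" if hx: "(x, c) \<in> op_mult (mp_inv A) A" for x c
  proof -
    obtain y where xy: "(x, y) \<in> A" "(y, c) \<in> mp_inv A" using hx unfolding op_mult_def by blast
    then have c: "c \<in> carrier_op A" "(c, orth_proj (Range A) y) \<in> A" using mp_inv_iff[OF op cR] by auto
    have "orth_proj (Range A) y = y" using xy(1) by (intro orth_proj_id[OF sR cR]) blast
    then have "(c, y) \<in> A" using c(2) by simp
    from sub_diff[OF sA xy(1) this] have "(x - c, 0) \<in> A" by simp
    then have "x - c \<in> orthogonal_comp V" using VN by (simp add: N_def null_space_def)
    moreover have "c \<in> V" using c(1) by (simp add: carrier_iff V_def N_def)
    ultimately show "c = P x" unfolding P_def by (intro orth_proj_unique[OF sV cV, symmetric])
  qed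
  have domM: "Domain (mp_inv A) = UNIV" by (rule mp_inv_dom[OF op cA cR])
  have bwd: "(x, P x) \<in> op_mult (mp_inv A) A" if hx: "x \<in> Domain A" for x
  proof -
    obtain y where xy: "(x, y) \<in> A" using hx by blast
    obtain c where "(y, c) \<in> mp_inv A" using domM by blast
    then have m: "(x, c) \<in> op_mult (mp_inv A) A" using xy unfolding op_mult_def by blast
    then have "c = P x" by (rule fwd)
    then show ?thesis using m by simp
  qed
  have PV: "proj_op V = {(x, P x) | x. True}" unfolding P_def by (rule proj_op_eq[OF sV cV])
  show ?thesis
  proof
    have "op_mult (mp_inv A) A \<subseteq> proj_op V"
    proof
      fix p assume "p \<in> op_mult (mp_inv A) A"
      then obtain x c where "p = (x, c)" "(x, c) \<in> op_mult (mp_inv A) A" by (cases p) auto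
      then show "p \<in> proj_op V" using fwd PV by blast
    qed
    then have "closure (op_mult (mp_inv A) A) \<subseteq> proj_op V"
      using closed_proj_op[OF cV] by (rule closure_minimal)
    then show "closure (op_mult (mp_inv A) A) \<subseteq> proj_op (orthogonal_comp (null_space A))"
      by (simp add: V_def N_def)
  next
    show "proj_op (orthogonal_comp (null_space A)) \<subseteq> closure (op_mult (mp_inv A) A)"
    proof
      fix p assume "p \<in> proj_op (orthogonal_comp (null_space A))"
      then have "p \<in> proj_op V" by (simp add: V_def N_def)
      then have "p \<in> {(x, P x) | x. True}" using PV by simp
      then obtain x where p: "p = (x, P x)" by blast
      have "x \<in> closure (Domain A)" using dA by simp
      then obtain d where d: "\<And>n. d n \<in> Domain A" "d \<longlonglongrightarrow> x" unfolding closure_sequential by blast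
      have blP: "bounded_linear P" unfolding P_def by (rule bounded_linear_orth_proj[OF sV cV])
      have "(\<lambda>n. P (d n)) \<longlonglongrightarrow> P x" by (rule bounded_linear.tendsto[OF blP d(2)])
      then have "(\<lambda>n. (d n, P (d n))) \<longlonglongrightarrow> (x, P x)" using d(2) by (intro tendsto_Pair)
      moreover have "\<And>n. (d n, P (d n)) \<in> op_mult (mp_inv A) A" using bwd d(1) by blast
      ultimately show "p \<in> closure (op_mult (mp_inv A) A)" unfolding p closure_sequential
        by (intro exI[of _ "\<lambda>n. (d n, P (d n))"]) simp
    qed
  qed
qed

lemma mp_inv_adj:
  fixes S :: "('a::{real_inner,complete_space} \<times> 'b::{real_inner,complete_space}) set"
  assumes op: "is_op S" and cS: "closed S" and dS: "closure (Domain S) = UNIV" and cR: "closed (Range S)"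
  shows "mp_inv (adj S) = adj (mp_inv S)"
proof -
  have sS: "subspace S" using op by (rule is_op_sub)
  have opA: "is_op (adj S)" by (rule is_op_adj[OF dS])
  have RA: "Range (adj S) = orthogonal_comp (null_space S)" by (rule range_adj[OF op cS cR])
  have cRA: "closed (Range (adj S))" using RA closed_orthogonal_comp by simp
  have sR: "subspace (Range S)" by (rule subspace_Range[OF sS])
  have sRA: "subspace (Range (adj S))" by (rule subspace_Range[OF subspace_adj])
  have NS: "null_space S = orthogonal_comp (Range (adj S))" by (rule null_space_closed_op[OF sS cS])
  have RR: "orthogonal_comp (orthogonal_comp (Range S)) = Range S" by (rule perp_perp_closed[OF sR cR])
  show ?thesis
  proof (rule fun_ext_graph[symmetric])
    show "mp_inv (adj S) \<subseteq> adj (mp_inv S)"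
    proof
      fix p assume "p \<in> mp_inv (adj S)"
      then obtain h s where p: "p = (h, s)" "(h, s) \<in> mp_inv (adj S)" by (cases p) auto
      then have s: "s \<in> carrier_op (adj S)" "(s, orth_proj (Range (adj S)) h) \<in> adj S"
        using mp_inv_iff[OF opA cRA] by auto
      define Ph where "Ph = orth_proj (Range (adj S)) h"
      have sRS: "s \<in> Range S" using s(1) RR by (simp add: carrier_iff null_space_adj)
      have "inner x h = inner y s" if yx: "(y, x) \<in> mp_inv S" for y x
      proof -
        have x: "x \<in> carrier_op S" "(x, orth_proj (Range S) y) \<in> S" using yx mp_inv_iff[OF op cR] by auto
        define Qy where "Qy = orth_proj (Range S) y"
        have "y - Qy \<in> orthogonal_comp (Range S)" unfolding Qy_def by (rule orth_proj(2)[OF sR cR])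
        then have e1: "inner s (y - Qy) = 0" using sRS by (simp add: in_perp_iff)
        have e2: "inner Qy s = inner x Ph" using s(2) x(2) by (simp add: adj_iff Qy_def Ph_def)
        have "h - Ph \<in> orthogonal_comp (Range (adj S))" unfolding Ph_def by (rule orth_proj(2)[OF sRA cRA])
        then have "h - Ph \<in> null_space S" using NS by simp
        then have e3: "inner (h - Ph) x = 0" using x(1) by (simp add: carrier_iff in_perp_iff)
        have "inner y s = inner Qy s + inner s (y - Qy)" by (simp add: inner_diff_right inner_commute)
        also have "\<dots> = inner x Ph" using e1 e2 by simp
        also have "\<dots> = inner x h"
        proof -
          have "inner (h - Ph) x = inner h x - inner Ph x" by (rule inner_diff_left)
          moreover have "inner h x = inner x h" "inner Ph x = inner x Ph" by (simp_all add: inner_commute)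
          ultimately show ?thesis using e3 by linarith
        qed
        finally show ?thesis by simp
      qed
      then show "p \<in> adj (mp_inv S)" using p(1) by (simp add: adj_iff)
    qed
    show "Domain (mp_inv (adj S)) = UNIV" by (rule mp_inv_dom[OF opA closed_adj cRA])
    have "closure (Domain (mp_inv S)) = UNIV" using mp_inv_dom[OF op cS cR] by simp
    then have "is_op (adj (mp_inv S))" by (rule is_op_adj)
    then show "\<And>x y z. (x, y) \<in> adj (mp_inv S) \<Longrightarrow> (x, z) \<in> adj (mp_inv S) \<Longrightarrow> y = z"
      using is_op_fun by blast
  qed
qed


lemma vn_surj:
  fixes T :: "('a::{real_inner,complete_space} \<times> 'b::{real_inner,complete_space}) set"
  assumes op: "is_op T" and cT: "closed T"
  shows "\<exists>u z. (u, z) \<in> op_mult (adj T) T \<and> h = u + z"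
proof -
  have sT: "subspace T" using op by (rule is_op_sub)
  define p where "p = orth_proj T (h, 0::'b)"
  have pT: "p \<in> T" unfolding p_def by (rule orth_proj(1)[OF sT cT])
  have qT: "(h, 0::'b) - p \<in> orthogonal_comp T" unfolding p_def by (rule orth_proj(2)[OF sT cT])
  obtain u v where p: "p = (u, v)" by (cases p)
  have "inner w (- v) = inner x (- (h - u))" if "(x, w) \<in> T" for x w
  proof -
    have "inner (x, w) ((h, 0) - p) = 0" using qT that by (simp add: in_perp_iff)
    then have "inner (x, w) (h - u, - v) = 0" using p by simp
    then have h1: "inner x (h - u) + inner w (- v) = 0" by simp
    show ?thesis using h1 unfolding inner_minus_right by linarith
  qed
  then have "(- v, - (h - u)) \<in> adj T" by (simp add: adj_iff)
  then have "(v, h - u) \<in> adj T" using sub_neg[OF subspace_adj] by fastforce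
  moreover have "(u, v) \<in> T" using pT p by simp
  ultimately have "(u, h - u) \<in> op_mult (adj T) T" by (auto simp: op_mult_def)
  then show ?thesis by (intro exI[of _ u] exI[of _ "h - u"]) simp
qed

lemma BB_sub_adj:
  fixes T :: "('a::real_inner \<times> 'b::real_inner) set"
  shows "op_mult (adj T) T \<subseteq> adj (op_mult (adj T) T)"
proof
  fix p assume "p \<in> op_mult (adj T) T"
  then obtain u z v where p: "p = (u, z)" "(u, v) \<in> T" "(v, z) \<in> adj T" unfolding op_mult_def by blast
  have "inner w u = inner x z" if hx: "(x, w) \<in> op_mult (adj T) T" for x w
  proof -
    obtain y where y: "(x, y) \<in> T" "(y, w) \<in> adj T" using hx unfolding op_mult_def by blast
    have "inner v y = inner u w" using y(2) p(2) by (simp add: adj_iff)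
    moreover have "inner y v = inner x z" using p(3) y(1) by (simp add: adj_iff)
    ultimately show ?thesis by (simp add: inner_commute)
  qed
  then show "p \<in> adj (op_mult (adj T) T)" using p(1) by (simp add: adj_iff)
qed

lemma BB_selfadj:
  fixes T :: "('a::{real_inner,complete_space} \<times> 'b::{real_inner,complete_space}) set"
  assumes op: "is_op T" and cT: "closed T"
  shows "adj (op_mult (adj T) T) = op_mult (adj T) T"
proof
  show "op_mult (adj T) T \<subseteq> adj (op_mult (adj T) T)" by (rule BB_sub_adj)
next
  define B where "B = op_mult (adj T) T"
  have sub: "B \<subseteq> adj B" unfolding B_def by (rule BB_sub_adj)
  show "adj (op_mult (adj T) T) \<subseteq> op_mult (adj T) T"
  proof
    fix p assume "p \<in> adj (op_mult (adj T) T)"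
    then obtain y z where p: "p = (y, z)" "(y, z) \<in> adj B" unfolding B_def by (cases p) auto
    obtain u au where u: "(u, au) \<in> B" "y + z = u + au" using vn_surj[OF op cT] unfolding B_def by blast
    have "(u, au) \<in> adj B" using sub u(1) by blast
    from sub_diff[OF subspace_adj p(2) this] have e: "(y - u, z - au) \<in> adj B" .
    define e where "e = y - u"
    have ze: "z - au = - e" using u(2) by (simp add: e_def algebra_simps)
    have orth: "inner (v + av) e = 0" if "(v, av) \<in> B" for v av
    proof -
      have i1: "inner av (y - u) = inner v (z - au)" using e that by (simp add: adj_iff)
      have "inner av e = inner v (- e)" using i1 ze by (simp only: e_def)
      then show ?thesis by (simp add: inner_add_left inner_minus_right)
    qed
    obtain v av where "(v, av) \<in> B" "e = v + av" using vn_surj[OF op cT] unfolding B_def by blast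
    then have "inner e e = 0" using orth by simp
    then have "e = 0" by simp
    then have "y = u" "z = au" using ze by (simp_all add: e_def)
    then show "p \<in> op_mult (adj T) T" using u(1) p(1) by (simp add: B_def)
  qed
qed

lemma core:
  fixes T :: "('a::{real_inner,complete_space} \<times> 'b::{real_inner,complete_space}) set"
  assumes op: "is_op T" and cT: "closed T"
  shows "closure {p \<in> T. fst p \<in> Domain (op_mult (adj T) T)} = T"
proof -
  define B where "B = op_mult (adj T) T"
  define G where "G = {p \<in> T. fst p \<in> Domain B}"
  have sT: "subspace T" using op by (rule is_op_sub)
  have sDB: "subspace (Domain B)" unfolding B_def
    by (rule subspace_Domain[OF op_mult_subspace[OF subspace_adj sT]])
  have sG: "subspace G"
  proof (rule subspace_pairI)
    show "(0, 0) \<in> G" using sub_0[OF sT] subspace_0[OF sDB] by (simp add: G_def)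
    show "(a + c, b + d) \<in> G" if "(a, b) \<in> G" "(c, d) \<in> G" for a b c d
      using that sub_add[OF sT] subspace_add[OF sDB] by (simp add: G_def)
    show "(r *\<^sub>R a, r *\<^sub>R b) \<in> G" if "(a, b) \<in> G" for r a b
      using that sub_scale[OF sT] subspace_scale[OF sDB] by (simp add: G_def)
  qed
  have GT: "G \<subseteq> T" by (auto simp: G_def)
  define C where "C = closure G"
  have sC: "subspace C" "closed C" unfolding C_def using subspace_closure_real[OF sG] by auto
  have CT: "C \<subseteq> T" unfolding C_def using GT cT by (rule closure_minimal)
  have "T \<subseteq> C"
  proof
    fix p assume pT: "p \<in> T"
    define r where "r = orth_proj C p"
    have rC: "r \<in> C" unfolding r_def by (rule orth_proj(1)[OF sC])
    define q where "q = p - r"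
    have qC: "q \<in> orthogonal_comp G"
      using orth_proj(2)[OF sC, of p] orthogonal_comp_closure[of G] by (simp add: q_def r_def C_def)
    have qT: "q \<in> T" unfolding q_def using subspace_diff[OF sT pT] rC CT by blast
    obtain q1 q2 where q: "q = (q1, q2)" by (cases q)
    obtain u z where uz: "(u, z) \<in> B" "q1 = u + z" using vn_surj[OF op cT] unfolding B_def by blast
    then obtain v where uv: "(u, v) \<in> T" "(v, z) \<in> adj T" unfolding B_def op_mult_def by blast
    have "(u, v) \<in> G" using uv(1) uz(1) by (auto simp: G_def)
    then have "inner (u, v) q = 0" using qC by (simp add: in_perp_iff)
    then have e1: "inner u q1 + inner v q2 = 0" using q by simp
    have "inner q2 v = inner q1 z" using uv(2) qT q by (simp add: adj_iff)
    then have "inner q1 (u + z) = 0" using e1 by (simp add: inner_add_right inner_commute)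
    then have q10: "q1 = 0" using uz(2) by simp
    then have "(0, q2) \<in> T" using qT q by simp
    then have "q2 = 0" using is_op_fun[OF op _ is_op_00[OF op]] by blast
    then have "q = 0" using q q10 by (simp add: zero_prod_def)
    then show "p \<in> C" using rC by (simp add: q_def)
  qed
  then have "C = T" using CT by blast
  then show ?thesis by (simp add: C_def G_def B_def)
qed


context
  fixes T :: "('a::{real_inner,complete_space} \<times> 'b::{real_inner,complete_space}) set"
  assumes op: "is_op T" and cT: "closed T" and dT: "closure (Domain T) = UNIV" and cR: "closed (Range T)"
begin

lemma t_sT: "subspace T" using op by (rule is_op_sub)
lemma t_opA: "is_op (adj T)" by (rule is_op_adj[OF dT])
lemma t_dA: "closure (Domain (adj T)) = UNIV" by (rule dense_adj_domain[OF op cT])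
lemma t_RA: "Range (adj T) = orthogonal_comp (null_space T)" by (rule range_adj[OF op cT cR])
lemma t_cRA: "closed (Range (adj T))" using t_RA closed_orthogonal_comp by simp
lemma t_aa: "adj (adj T) = T" by (rule adj_adj_closed[OF t_sT cT])
lemma t_opB: "is_op (op_mult (adj T) T)" by (rule op_mult_is_op[OF t_opA op])
lemma t_adjB: "adj (op_mult (adj T) T) = op_mult (adj T) T" by (rule BB_selfadj[OF op cT])
lemma t_cB: "closed (op_mult (adj T) T)" using closed_adj[of "op_mult (adj T) T"] t_adjB by simp
lemma t_RB: "Range (op_mult (adj T) T) = Range (adj T)" by (rule range_BS[OF op cR])
lemma t_NB: "null_space (op_mult (adj T) T) = null_space T" by (rule null_BS[OF op])
lemma t_cRB: "closed (Range (op_mult (adj T) T))" using t_RB t_cRA by simp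
lemma t_sN: "subspace (null_space T)" by (rule subspace_null_space[OF t_sT])
lemma t_cN: "closed (null_space T)" by (rule closed_null_space[OF cT])
lemma t_VN: "orthogonal_comp (orthogonal_comp (null_space T)) = null_space T"
  by (rule perp_perp_closed[OF t_sN t_cN])
lemma t_sR: "subspace (Range T)" by (rule subspace_Range[OF t_sT])

lemma t_six: "op_mult (mp_inv T) (mp_inv (adj T)) = mp_inv (op_mult (adj T) T)"
proof (rule fun_ext_graph)
  define B where "B = op_mult (adj T) T"
  show "mp_inv (op_mult (adj T) T) \<subseteq> op_mult (mp_inv T) (mp_inv (adj T))"
  proof
    fix p assume "p \<in> mp_inv (op_mult (adj T) T)"
    then obtain h a where p: "p = (h, a)" "(h, a) \<in> mp_inv B" unfolding B_def by (cases p) auto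
    then have a: "a \<in> carrier_op B" "(a, orth_proj (Range (adj T)) h) \<in> B"
      using mp_inv_iff[OF t_opB t_cRB] t_RB unfolding B_def by auto
    then obtain v where v: "(a, v) \<in> T" "(v, orth_proj (Range (adj T)) h) \<in> adj T"
      unfolding B_def op_mult_def by blast
    have vc: "v \<in> carrier_op (adj T)" using range_subset_carrier_adj[of T] v by blast
    have hv: "(h, v) \<in> mp_inv (adj T)" using mp_inv_iff[OF t_opA t_cRA] vc v(2) by blast
    have "orth_proj (Range T) v = v" using v(1) by (intro orth_proj_id[OF t_sR cR]) blast
    moreover have "a \<in> carrier_op T" using a(1) v(1) t_NB by (auto simp: carrier_iff B_def)
    ultimately have va: "(v, a) \<in> mp_inv T" using mp_inv_iff[OF op cR] v(1) by simp
    show "p \<in> op_mult (mp_inv T) (mp_inv (adj T))" using p(1) hv va unfolding op_mult_def by blast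
  qed
  show "Domain (mp_inv (op_mult (adj T) T)) = UNIV"
    by (rule mp_inv_dom'[OF t_opB closed_null_space[OF t_cB] t_cRB])
  show "\<And>x y z. (x, y) \<in> op_mult (mp_inv T) (mp_inv (adj T)) \<Longrightarrow> (x, z) \<in> op_mult (mp_inv T) (mp_inv (adj T)) \<Longrightarrow> y = z"
    using is_op_fun[OF op_mult_is_op[OF mp_inv_is_op[OF op] mp_inv_is_op[OF t_opA]]] by blast
qed

lemma t_two: "closure (op_mult (mp_inv (adj T)) (mp_inv (mp_inv (op_mult (adj T) T)))) = T"
proof -
  define B where "B = op_mult (adj T) T"
  define Bd where "Bd = mp_inv B"
  define N where "N = null_space T"
  define V where "V = orthogonal_comp N"
  define D where "D = Domain B"
  define P where "P = orth_proj V"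
  have sV: "subspace V" "closed V" unfolding V_def by (rule subspace_orthogonal_comp, rule closed_orthogonal_comp)
  have VN: "orthogonal_comp V = N" unfolding V_def N_def by (rule t_VN)
  have RBV: "Range B = V" unfolding B_def V_def N_def using t_RB t_RA by simp
  have RAV: "Range (adj T) = V" unfolding V_def N_def by (rule t_RA)
  have NBN: "null_space B = N" unfolding B_def N_def by (rule t_NB)
  have opB: "is_op B" unfolding B_def by (rule t_opB)
  have cB: "closed B" unfolding B_def by (rule t_cB)
  have sB: "subspace B" using opB by (rule is_op_sub)
  have cRB: "closed (Range B)" unfolding B_def by (rule t_cRB)
  have sD: "subspace D" unfolding D_def by (rule subspace_Domain[OF sB])
  have domBd: "Domain Bd = UNIV" unfolding Bd_def by (rule mp_inv_dom'[OF opB closed_null_space[OF cB] cRB])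
  have carB: "carrier_op B = D \<inter> V" by (simp add: carrier_op_def NBN D_def V_def)
  have Bd_iff: "(h, a) \<in> Bd \<longleftrightarrow> a \<in> D \<inter> V \<and> (a, P h) \<in> B" for h a
    unfolding Bd_def using mp_inv_iff[OF opB cRB] carB RBV by (simp add: P_def)
  have MA_iff: "(x, z) \<in> mp_inv (adj T) \<longleftrightarrow> z \<in> carrier_op (adj T) \<and> (z, P x) \<in> adj T" for x z
    using mp_inv_iff[OF t_opA t_cRA] RAV by (simp add: P_def)
  have ND: "N \<subseteq> D"
  proof
    fix n assume "n \<in> N"
    then have "n \<in> null_space B" using NBN by simp
    then have "(n, 0) \<in> B" by (simp add: null_space_def)
    then show "n \<in> D" by (auto simp: D_def)
  qed
  have B00: "(0, 0) \<in> B" by (rule sub_0[OF sB])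
  have NBd: "null_space Bd = N"
  proof (intro set_eqI iffI)
    fix h assume "h \<in> null_space Bd"
    then have "(0, P h) \<in> B" using Bd_iff by (simp add: null_space_def)
    then have Ph: "P h = 0" using is_op_fun[OF opB _ B00] by blast
    have "h - P h \<in> orthogonal_comp V" unfolding P_def by (rule orth_proj(2)[OF sV])
    then show "h \<in> N" using Ph VN by simp
  next
    fix n assume "n \<in> N"
    then have "n \<in> orthogonal_comp V" using VN by simp
    then have "P n = 0" unfolding P_def by (rule orth_proj_perp_zero[OF sV])
    moreover have "(0::'a) \<in> D \<inter> V" using subspace_0[OF sD] subspace_0[OF sV(1)] by blast
    ultimately have "(n, 0) \<in> Bd" using Bd_iff B00 by simp
    then show "n \<in> null_space Bd" by (simp add: null_space_def)
  qed
  have carBd: "carrier_op Bd = V" by (simp add: carrier_op_def domBd NBd V_def)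
  have RBd: "Range Bd \<subseteq> V" using Bd_iff by blast
  have DVR: "D \<inter> V \<subseteq> Range Bd"
  proof
    fix c assume c: "c \<in> D \<inter> V"
    then obtain x where cx: "(c, x) \<in> B" by (auto simp: D_def)
    then have "x \<in> V" using RBV by blast
    then have "P x = x" unfolding P_def by (rule orth_proj_id[OF sV])
    then have "(x, c) \<in> Bd" using Bd_iff c cx by simp
    then show "c \<in> Range Bd" by blast
  qed
  have dD: "closure D = UNIV"
    using dense_adj_domain[OF opB cB] by (simp add: t_adjB B_def D_def)
  have perp: "orthogonal_comp (Range Bd) \<subseteq> N"
  proof
    fix y assume "y \<in> orthogonal_comp (Range Bd)"
    then have y: "y \<in> orthogonal_comp (D \<inter> V)" using orthogonal_comp_anti_mono[OF DVR] by blast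
    define r where "r = P y"
    have rV: "r \<in> V" unfolding r_def P_def by (rule orth_proj(1)[OF sV])
    have yr: "y - r \<in> orthogonal_comp V" unfolding r_def P_def by (rule orth_proj(2)[OF sV])
    have "inner d r = 0" if d: "d \<in> D" for d
    proof -
      have PdV: "P d \<in> V" unfolding P_def by (rule orth_proj(1)[OF sV])
      have dPd: "d - P d \<in> orthogonal_comp V" unfolding P_def by (rule orth_proj(2)[OF sV])
      then have "d - P d \<in> D" using VN ND by blast
      then have "d - (d - P d) \<in> D" using subspace_diff[OF sD d] by blast
      then have "P d \<in> D \<inter> V" using PdV by simp
      then have e1: "inner (P d) y = 0" using y by (simp add: in_perp_iff)
      have e2: "inner r (d - P d) = 0" using dPd rV by (simp add: in_perp_iff)
      have e3: "inner (P d) (y - r) = 0" using yr PdV by (simp add: in_perp_iff)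
      have "inner d r = inner (P d) r + inner (d - P d) r" by (simp add: inner_diff_left)
      also have "inner (d - P d) r = 0" using e2 by (simp add: inner_commute)
      also have "inner (P d) r = inner (P d) y - inner (P d) (y - r)" by (simp add: inner_diff_right)
      finally show ?thesis using e1 e3 by simp
    qed
    then have "r \<in> orthogonal_comp D" by (simp add: in_perp_iff inner_commute)
    then have "r \<in> orthogonal_comp (closure D)" using orthogonal_comp_closure by blast
    then have "r = 0" using dD by (simp add: in_perp_iff)
    then show "y \<in> N" using yr VN by simp
  qed
  define W where "W = op_mult (mp_inv (adj T)) (mp_inv Bd)"
  have WT: "W \<subseteq> T"
  proof
    fix p assume "p \<in> W"
    then obtain g z x where p: "p = (g, z)" "(g, x) \<in> mp_inv Bd" "(x, z) \<in> mp_inv (adj T)"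
      unfolding W_def op_mult_def by blast
    then obtain y1 y2 where g: "g = y1 + y2" "(x, y1) \<in> Bd" "x \<in> carrier_op Bd" "y2 \<in> orthogonal_comp (Range Bd)"
      unfolding mp_inv_mem by blast
    have xV: "x \<in> V" using g(3) carBd by simp
    then have Px: "P x = x" unfolding P_def by (rule orth_proj_id[OF sV])
    have "(y1, x) \<in> B" using g(2) Bd_iff Px by simp
    then obtain v where v: "(y1, v) \<in> T" "(v, x) \<in> adj T" unfolding B_def op_mult_def by blast
    have z: "z \<in> carrier_op (adj T)" "(z, x) \<in> adj T" using p(3) MA_iff Px by auto
    have vc: "v \<in> carrier_op (adj T)" using range_subset_carrier_adj[of T] v by blast
    have "z = v" using carrier_unique[OF t_opA z(1) vc z(2) v(2)] .
    have "y2 \<in> N" using g(4) perp by blast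
    then have "(y2, 0) \<in> T" by (simp add: N_def null_space_def)
    from sub_add[OF t_sT v(1) this] have "(y1 + y2, v) \<in> T" by simp
    then show "p \<in> T" using p(1) g(1) \<open>z = v\<close> by simp
  qed
  have GW: "{p \<in> T. fst p \<in> D} \<subseteq> W"
  proof
    fix p assume "p \<in> {p \<in> T. fst p \<in> D}"
    then obtain u w where p: "p = (u, w)" "(u, w) \<in> T" "u \<in> D" by (cases p) auto
    define y2 where "y2 = orth_proj N u"
    define y1 where "y1 = u - y2"
    have sN: "subspace N" "closed N" unfolding N_def by (rule t_sN, rule t_cN)
    have y2N: "y2 \<in> N" unfolding y2_def by (rule orth_proj(1)[OF sN])
    have y1V: "y1 \<in> V" unfolding y1_def y2_def V_def by (rule orth_proj(2)[OF sN])
    have y1D: "y1 \<in> D" unfolding y1_def using subspace_diff[OF sD p(3)] y2N ND by blast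
    have "(y2, 0) \<in> T" using y2N by (simp add: N_def null_space_def)
    from sub_diff[OF t_sT p(2) this] have y1w: "(y1, w) \<in> T" by (simp add: y1_def)
    obtain x where "(y1, x) \<in> B" using y1D by (auto simp: D_def)
    then obtain w' where w': "(y1, w') \<in> T" "(w', x) \<in> adj T" unfolding B_def op_mult_def by blast
    have "w' = w" using is_op_fun[OF op w'(1) y1w] .
    then have wx: "(w, x) \<in> adj T" using w'(2) by simp
    have "x \<in> V" using \<open>(y1, x) \<in> B\<close> RBV by blast
    then have Px: "P x = x" unfolding P_def by (rule orth_proj_id[OF sV])
    have xy1: "(x, y1) \<in> Bd" using Bd_iff Px y1V y1D \<open>(y1, x) \<in> B\<close> by simp
    have xc: "x \<in> carrier_op Bd" using carBd \<open>x \<in> V\<close> by simp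
    have "inner r y2 = 0" if "r \<in> Range Bd" for r
    proof -
      have "r \<in> V" using that RBd by blast
      then have "inner y2 r = 0" using y2N by (simp add: V_def in_perp_iff)
      then show ?thesis by (simp add: inner_commute)
    qed
    then have y2p: "y2 \<in> orthogonal_comp (Range Bd)" by (simp add: in_perp_iff)
    have "u = y1 + y2" by (simp add: y1_def)
    then have ux: "(u, x) \<in> mp_inv Bd" unfolding mp_inv_mem using xy1 xc y2p by blast
    have wc: "w \<in> carrier_op (adj T)" using range_subset_carrier_adj[of T] p(2) wx by blast
    have "(x, w) \<in> mp_inv (adj T)" using MA_iff wc wx Px by simp
    then show "p \<in> W" using ux p(1) unfolding W_def op_mult_def by blast
  qed
  have "T = closure {p \<in> T. fst p \<in> D}" using core[OF op cT] by (simp add: D_def B_def)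
  also have "\<dots> \<subseteq> closure W" using GW by (rule closure_mono)
  finally have "T \<subseteq> closure W" .
  moreover have "closure W \<subseteq> T" using WT cT by (rule closure_minimal)
  ultimately show ?thesis by (simp add: W_def Bd_def B_def)
qed

end


theorem proposition2p1:
  fixes T :: "('a::{real_inner, complete_space} \<times> 'b::{real_inner, complete_space}) set"
  assumes "is_op T" and "densely_defined T" and "closed_op T" and "closed (Range T)"
  shows "(cauchy_dual T = adj (mp_inv T) \<and> bounded_op (cauchy_dual T))
       \<and> (closable (cauchy_dual (cauchy_dual T)) \<and>
         op_closure (cauchy_dual (cauchy_dual T)) = T)
       \<and> (adj (cauchy_dual T) = cauchy_dual (adj T))
       \<and> (op_mult (adj T) (cauchy_dual T) = op_closure (op_mult (cauchy_dual (adj T)) T) \<and>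
         op_closure (op_mult (cauchy_dual (adj T)) T) = proj_op (Range (adj T)))
       \<and> (op_closure (op_mult (cauchy_dual T) (adj T)) = op_mult T (cauchy_dual (adj T)) \<and>
         op_mult T (cauchy_dual (adj T)) = proj_op (Range T))
       \<and> (op_mult (adj (cauchy_dual T)) (cauchy_dual T) = cauchy_dual (op_mult (adj T) T))"
proof -
  note op = assms(1)
  have dT: "closure (Domain T) = UNIV" using assms(2) by (simp add: densely_defined_def)
  have cT: "closed T" using assms(3) by (simp add: closed_op_def)
  note cR = assms(4)
  note F = t_sT[OF op cT dT cR] t_opA[OF op cT dT cR] t_dA[OF op cT dT cR] t_RA[OF op cT dT cR]
    t_cRA[OF op cT dT cR] t_aa[OF op cT dT cR] t_opB[OF op cT dT cR] t_adjB[OF op cT dT cR]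
    t_cB[OF op cT dT cR] t_RB[OF op cT dT cR] t_cRB[OF op cT dT cR]
  have sT: "subspace T" and opA: "is_op (adj T)" and dA: "closure (Domain (adj T)) = UNIV"
    and RA: "Range (adj T) = orthogonal_comp (null_space T)" and cRA: "closed (Range (adj T))"
    and aa: "adj (adj T) = T" and opB: "is_op (op_mult (adj T) T)"
    and adjB: "adj (op_mult (adj T) T) = op_mult (adj T) T" and cB: "closed (op_mult (adj T) T)"
    and RB: "Range (op_mult (adj T) T) = Range (adj T)" and cRB: "closed (Range (op_mult (adj T) T))"
    using F by auto
  have cA: "closed (adj T)" by (rule closed_adj)
  have w1: "cauchy_dual T = mp_inv (adj T)"
    by (rule cauchy_dual_eq[OF op cT opA cR cRA])
  have w2: "cauchy_dual (adj T) = mp_inv T"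
    using cauchy_dual_eq[OF opA cA] aa op cRA cR by simp
  have j1: "mp_inv (adj T) = adj (mp_inv T)" by (rule mp_inv_adj[OF op cT dT cR])
  have j2: "mp_inv T = adj (mp_inv (adj T))"
    using mp_inv_adj[OF opA cA dA cRA] aa by simp
  have i1: "cauchy_dual T = adj (mp_inv T) \<and> bounded_op (cauchy_dual T)"
    using w1 j1 bounded_mp_inv[OF opA cA cRA] by simp
  have i3: "adj (cauchy_dual T) = cauchy_dual (adj T)" using w1 w2 j2 by simp
  have six: "op_mult (mp_inv T) (mp_inv (adj T)) = mp_inv (op_mult (adj T) T)"
    by (rule t_six[OF op cT dT cR])
  have wB: "cauchy_dual (op_mult (adj T) T) = mp_inv (op_mult (adj T) T)"
    using cauchy_dual_eq[OF opB cB] adjB opB cRB by simp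
  have i6: "op_mult (adj (cauchy_dual T)) (cauchy_dual T) = cauchy_dual (op_mult (adj T) T)"
    using i3 w2 w1 six wB by simp
  have ww: "cauchy_dual (cauchy_dual T) = op_mult (mp_inv (adj T)) (mp_inv (mp_inv (op_mult (adj T) T)))"
  proof -
    have "cauchy_dual (cauchy_dual T) = op_mult (cauchy_dual T) (mp_inv (op_mult (adj (cauchy_dual T)) (cauchy_dual T)))"
      by (simp add: cauchy_dual_def)
    also have "\<dots> = op_mult (mp_inv (adj T)) (mp_inv (mp_inv (op_mult (adj T) T)))"
      using i3 w2 w1 six by simp
    finally show ?thesis .
  qed
  have two: "op_closure (cauchy_dual (cauchy_dual T)) = T"
    using t_two[OF op cT dT cR] ww by (simp add: op_closure_def)
  have i2: "closable (cauchy_dual (cauchy_dual T)) \<and> op_closure (cauchy_dual (cauchy_dual T)) = T"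
    using two op by (simp add: closable_def op_closure_def)
  have p1: "op_mult (adj T) (cauchy_dual T) = proj_op (Range (adj T))"
    using w1 op_mult_mp_inv[OF opA closed_null_space[OF cA]] by simp
  have p2: "op_closure (op_mult (cauchy_dual (adj T)) T) = proj_op (Range (adj T))"
    using w2 closure_mp_inv_A[OF op cT dT cR] RA by (simp add: op_closure_def)
  have i4: "op_mult (adj T) (cauchy_dual T) = op_closure (op_mult (cauchy_dual (adj T)) T) \<and>
         op_closure (op_mult (cauchy_dual (adj T)) T) = proj_op (Range (adj T))"
    using p1 p2 by simp
  have sR: "subspace (Range T)" by (rule subspace_Range[OF sT])
  have q1: "op_closure (op_mult (cauchy_dual T) (adj T)) = proj_op (Range T)"
  proof -
    have "op_closure (op_mult (cauchy_dual T) (adj T)) = proj_op (orthogonal_comp (null_space (adj T)))"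
      using w1 closure_mp_inv_A[OF opA cA dA cRA] by (simp add: op_closure_def)
    also have "orthogonal_comp (null_space (adj T)) = Range T"
      using null_space_adj[of T] perp_perp_closed[OF sR cR] by simp
    finally show ?thesis .
  qed
  have q2: "op_mult T (cauchy_dual (adj T)) = proj_op (Range T)"
    using w2 op_mult_mp_inv[OF op closed_null_space[OF cT]] by simp
  have i5: "op_closure (op_mult (cauchy_dual T) (adj T)) = op_mult T (cauchy_dual (adj T)) \<and>
         op_mult T (cauchy_dual (adj T)) = proj_op (Range T)"
    using q1 q2 by simp
  show ?thesis using i1 i2 i3 i4 i5 i6 by blast
qed


end
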